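(* Let $\{Y_i\}_{i\in\mathbb{Z}}$ be a strictly stationary homogeneous real-valued Markov process with transition probability function $P(\cdot;\cdot)$ and stationary distribution $\nu$, and let $X_i=H(Y_i)$ for a Borel function $H:\mathbb{R}\to\mathbb{R}$. Suppose there is a $\sigma$-finite measure $\mu$ with $\nu\ll\mu$ and $P(x;\cdot)\ll\mu$ for all $x$; write $f_0$ for the density of $\nu$ and $f_1(x,\cdot)$ for the density of $P(x;\cdot)$ with respect to $\mu$. Let $A=H^{-1}((-\infty,\xi_p])$ and suppose there exist Borel sets $A_1\subset A$, $A_2\subset A^c$ with $\mu(A_1)>0$, $\mu(A_2)>0$ such that $f_0(x)>0$ and $f_1(x,y)>0$ for all $x,y\in A_1\cup A_2$. Then, with $\mathcal C_0=\sigma(Y_i:i\ne0)$ and $G_0(\xi_p)=P(X_0\le\xi_p\mid\mathcal C_0)$, we have $P(G_0(\xi_p)=1)<p$; consequently, by stationarity, condition (C.5) holds with $\mathcal D_j=\sigma(Y_j)$ and $\mathcal C_j=\sigma(Y_i:i\ne j)$.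
   Context: $F$ is the distribution function of $X_1$, $p\in(0,1)$, $\xi_p=\inf\{x:F(x)\ge p\}$, and $F(\xi_p)=p$. Condition (C.5): there exist $d\in(0,1)$ and sub-$\sigma$-fields $\mathcal C_i$ with $\sigma(\mathcal D_j:j\ne i)\cup\sigma(X_j:j\ne i)\subset\mathcal C_i$ and $P(G_i(\xi_p)=1)\le p-d$ for all $i\in\mathbb{Z}$, where $G_i(y)=P(X_i\le y\mid\mathcal C_i)$. *)

theory Defs
  imports "HOL-Probability.Probability"
begin

definition gen_sigma :: "'a measure \<Rightarrow> (int \<Rightarrow> 'a \<Rightarrow> real) \<Rightarrow> int set \<Rightarrow> 'a measure" where
  "gen_sigma M Y I = sigma (space M) {Y i -` B \<inter> space M | i B. i \<in> I \<and> B \<in> sets borel}"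

definition strictly_stationary :: "'a measure \<Rightarrow> (int \<Rightarrow> 'a \<Rightarrow> real) \<Rightarrow> bool" where
  "strictly_stationary M Y \<longleftrightarrow>
     (\<forall>J k. finite J \<longrightarrow>
        distr M (PiM J (\<lambda>_. borel)) (\<lambda>\<omega>. \<lambda>j\<in>J. Y (j + k) \<omega>)
      = distr M (PiM J (\<lambda>_. borel)) (\<lambda>\<omega>. \<lambda>j\<in>J. Y j \<omega>))"

definition homogeneous_markov :: "'a measure \<Rightarrow> (int \<Rightarrow> 'a \<Rightarrow> real) \<Rightarrow> (real \<Rightarrow> real measure) \<Rightarrow> bool" where
  "homogeneous_markov M Y P \<longleftrightarrow>
     (\<forall>x. prob_space (P x) \<and> sets (P x) = sets borel) \<and>
     (\<forall>B\<in>sets borel. (\<lambda>x. measure (P x) B) \<in> borel_measurable borel) \<and>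
     (\<forall>i. \<forall>B\<in>sets borel.
        AE \<omega> in M. real_cond_exp M (gen_sigma M Y {..i})
                      (indicator {\<omega>\<in>space M. Y (i + 1) \<omega> \<in> B}) \<omega>
                    = measure (P (Y i \<omega>)) B)"

definition Gcond :: "'a measure \<Rightarrow> (int \<Rightarrow> 'a \<Rightarrow> real) \<Rightarrow> (int \<Rightarrow> 'a measure) \<Rightarrow> int \<Rightarrow> real \<Rightarrow> 'a \<Rightarrow> real" where
  "Gcond M X C i y = real_cond_exp M (C i) (indicator {\<omega>\<in>space M. X i \<omega> \<le> y})"

definition cond_C5 :: "'a measure \<Rightarrow> (int \<Rightarrow> 'a \<Rightarrow> real) \<Rightarrow> (int \<Rightarrow> 'a measure) \<Rightarrow> (int \<Rightarrow> 'a measure)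
     \<Rightarrow> real \<Rightarrow> real \<Rightarrow> bool" where
  "cond_C5 M X D C p \<xi> \<longleftrightarrow>
     (\<exists>d. 0 < d \<and> d < 1 \<and>
        (\<forall>i. subalgebra M (C i) \<and>
             sets (sigma (space M)
                     ((\<Union>j\<in>-{i}. sets (D j)) \<union>
                      {X j -` B \<inter> space M | j B. j \<noteq> i \<and> B \<in> sets borel}))
               \<subseteq> sets (C i) \<and>
             measure M {\<omega>\<in>space M. Gcond M X C i \<xi> \<omega> = 1} \<le> p - d))"

end

theory Submission
  imports Defs
begin


locale mk = prob_space M for M :: "'a measure" +
  fixes Y :: "int \<Rightarrow> 'a \<Rightarrow> real" and P :: "real \<Rightarrow> real measure"
  assumes Y_rv[measurable]: "\<And>i. Y i \<in> borel_measurable M"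
  and markov: "homogeneous_markov M Y P"
begin

abbreviation "F I \<equiv> gen_sigma M Y I"

definition gens :: "int set \<Rightarrow> 'a set set" where
  "gens I = {Y i -` B \<inter> space M | i B. i \<in> I \<and> B \<in> sets borel}"

lemma gens_sub: "gens I \<subseteq> Pow (space M)" unfolding gens_def by auto

lemma gens_sets: "gens I \<subseteq> sets M"
  unfolding gens_def using Y_rv by (auto intro: measurable_sets)

lemma sets_F: "sets (F I) = sigma_sets (space M) (gens I)"
  unfolding gen_sigma_def gens_def[symmetric] using gens_sub by (simp add: sets_measure_of)

lemma space_F[simp]: "space (F I) = space M"
  unfolding gen_sigma_def gens_def[symmetric] using gens_sub by (simp add: space_measure_of_conv)

lemma sets_F_sub: "sets (F I) \<subseteq> sets M"
  unfolding sets_F using gens_sets by (simp add: sets.sigma_sets_subset)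

lemma subalg_F: "subalgebra M (F I)"
  unfolding subalgebra_def using sets_F_sub by simp

lemma sfs_F: "sigma_finite_subalgebra M (F I)"
  by (rule finite_measure_subalgebra_is_sigma_finite) 
     (simp add: finite_measure_subalgebra_def finite_measure_subalgebra_axioms_def subalg_F finite_measure_axioms)

lemma sets_F_mono: "I \<subseteq> J \<Longrightarrow> sets (F I) \<subseteq> sets (F J)"
  unfolding sets_F by (rule sigma_sets_mono') (auto simp: gens_def)

lemma subalg_FF: "I \<subseteq> J \<Longrightarrow> subalgebra (F J) (F I)"
  unfolding subalgebra_def using sets_F_mono by simp

lemma gens_in_F: "j \<in> I \<Longrightarrow> B \<in> sets borel \<Longrightarrow> Y j -` B \<inter> space M \<in> sets (F I)"
  unfolding sets_F gens_def by (rule sigma_sets.Basic) auto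

lemma Y_F[measurable]: "j \<in> I \<Longrightarrow> Y j \<in> borel_measurable (F I)"
  by (rule measurableI) (auto simp: gens_in_F)

end



context mk begin

definition fgens :: "int set \<Rightarrow> 'a set set" where
  "fgens I = {space M \<inter> (\<Inter>j\<in>J. Y j -` B j) | J B. finite J \<and> J \<subseteq> I \<and> (\<forall>j\<in>J. B j \<in> sets borel)}"

lemma fgens_mem: "a \<in> fgens I \<longleftrightarrow> (\<exists>J B. a = space M \<inter> (\<Inter>j\<in>J. Y j -` B j) \<and> finite J \<and> J \<subseteq> I \<and> (\<forall>j\<in>J. B j \<in> sets borel))"
  unfolding fgens_def by simp

lemma fgens_space: "space M \<in> fgens I"
  unfolding fgens_mem by (intro exI[of _ "{}"]) auto

lemma fgens_Int_stable: "Int_stable (fgens I)"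
proof (rule Int_stableI)
  fix a b assume "a \<in> fgens I" "b \<in> fgens I"
  then obtain J1 B1 J2 B2 where a: "a = space M \<inter> (\<Inter>j\<in>J1. Y j -` B1 j)" "finite J1" "J1 \<subseteq> I" "\<forall>j\<in>J1. B1 j \<in> sets borel"
    and b: "b = space M \<inter> (\<Inter>j\<in>J2. Y j -` B2 j)" "finite J2" "J2 \<subseteq> I" "\<forall>j\<in>J2. B2 j \<in> sets borel"
    unfolding fgens_mem by (elim exE conjE)
  define B where "B j = (if j \<in> J1 then B1 j else UNIV) \<inter> (if j \<in> J2 then B2 j else UNIV)" for j
  have "a \<inter> b = space M \<inter> (\<Inter>j\<in>J1\<union>J2. Y j -` B j)"
  proof (intro set_eqI iffI)
    fix x assume "x \<in> a \<inter> b" then show "x \<in> space M \<inter> (\<Inter>j\<in>J1\<union>J2. Y j -` B j)"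
      unfolding a b B_def by auto
  next
    fix x assume x: "x \<in> space M \<inter> (\<Inter>j\<in>J1\<union>J2. Y j -` B j)"
    have "x \<in> a" unfolding a
    proof (intro IntI INT_I)
      show "x \<in> space M" using x by simp
      fix j assume j: "j \<in> J1"
      have "Y j x \<in> B j" using x j by auto
      then show "x \<in> Y j -` B1 j" using j unfolding B_def by auto
    qed
    moreover have "x \<in> b" unfolding b
    proof (intro IntI INT_I)
      show "x \<in> space M" using x by simp
      fix j assume j: "j \<in> J2"
      have "Y j x \<in> B j" using x j by auto
      then show "x \<in> Y j -` B2 j" using j unfolding B_def by auto
    qed
    ultimately show "x \<in> a \<inter> b" by simp
  qed
  moreover have "\<forall>j\<in>J1\<union>J2. B j \<in> sets borel" unfolding B_def using a b by auto
  moreover have "finite (J1 \<union> J2)" "J1 \<union> J2 \<subseteq> I" using a b by auto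
  ultimately show "a \<inter> b \<in> fgens I" unfolding fgens_mem by (intro exI conjI) 
qed

lemma fgens_sub_F: "fgens I \<subseteq> sets (F I)"
proof
  fix a assume "a \<in> fgens I"
  then obtain J B where a: "a = space M \<inter> (\<Inter>j\<in>J. Y j -` B j)" "finite J" "J \<subseteq> I" "\<forall>j\<in>J. B j \<in> sets borel"
    unfolding fgens_mem by (elim exE conjE)
  show "a \<in> sets (F I)"
  proof (cases "J = {}")
    case True then show ?thesis using a sets.top[of "F I"] by simp
  next
    case False
    have "a = (\<Inter>j\<in>J. Y j -` B j \<inter> space (F I))" using a False by auto
    also have "\<dots> \<in> sets (F I)" using a False
      by (intro sets.finite_INT) (auto intro!: gens_in_F[simplified space_F[symmetric]])
    finally show ?thesis .
  qed
qed

lemma fgens_sub: "fgens I \<subseteq> sets M" using fgens_sub_F sets_F_sub by blast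

lemma fgens_Pow: "fgens I \<subseteq> Pow (space M)" unfolding fgens_def by auto

lemma sets_F_fgens: "sets (F I) = sigma_sets (space M) (fgens I)"
proof
  show "sets (F I) \<subseteq> sigma_sets (space M) (fgens I)"
    unfolding sets_F
  proof (rule sigma_sets_mono')
    show "gens I \<subseteq> fgens I"
    proof
      fix x assume "x \<in> gens I"
      then obtain i B where "x = Y i -` B \<inter> space M" "i \<in> I" "B \<in> sets borel" unfolding gens_def by blast
      then show "x \<in> fgens I" unfolding fgens_mem
        by (intro exI[of _ "{i}"] exI[of _ "\<lambda>_. B"]) auto
    qed
  qed
  show "sigma_sets (space M) (fgens I) \<subseteq> sets (F I)"
    using sets.sigma_sets_subset[of "fgens I" "F I"] fgens_sub_F by simp
qed

lemma int_ind[simp, intro]: "A \<in> sets M \<Longrightarrow> integrable M (indicator A :: 'a \<Rightarrow> real)"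
  by (simp add: integrable_indicator_iff emeasure_eq_measure)

abbreviation "CE I f \<equiv> real_cond_exp M (F I) f"

lemma sa:
  assumes "A \<in> sets M" "Q \<in> sets M"
  shows "(\<integral>x. indicator A x * CE I (indicator Q) x \<partial>M) = (\<integral>x. CE I (indicator A) x * indicator Q x \<partial>M)"
proof -
  interpret S: sigma_finite_subalgebra M "F I" by (rule sfs_F)
  have iA: "integrable M (indicator A :: 'a \<Rightarrow> real)" "integrable M (indicator Q :: 'a \<Rightarrow> real)"
    using assms by auto
  have i1: "integrable M (\<lambda>x. CE I (indicator Q) x * indicator A x)"
    using integrable_mult_indicator[OF assms(1) S.real_cond_exp_int(1)[OF iA(2)]] by (simp add: mult.commute)
  have i2: "integrable M (\<lambda>x. CE I (indicator A) x * indicator Q x)"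
    using integrable_mult_indicator[OF assms(2) S.real_cond_exp_int(1)[OF iA(1)]] by (simp add: mult.commute)
  have "(\<integral>x. indicator A x * CE I (indicator Q) x \<partial>M) = (\<integral>x. CE I (indicator Q) x * indicator A x \<partial>M)"
    by (simp add: mult.commute)
  also have "\<dots> = (\<integral>x. CE I (indicator Q) x * CE I (indicator A) x \<partial>M)"
    using S.real_cond_exp_intg(2)[OF i1] assms by simp
  also have "\<dots> = (\<integral>x. CE I (indicator A) x * CE I (indicator Q) x \<partial>M)"
    by (simp add: mult.commute)
  also have "\<dots> = (\<integral>x. CE I (indicator A) x * indicator Q x \<partial>M)"
    using S.real_cond_exp_intg(2)[OF i2] assms by simp
  finally show ?thesis .
qed

lemma dens_eq:
  fixes g :: "'a \<Rightarrow> real"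
  assumes "integrable M g" "AE x in M. 0 \<le> g x" "Q \<in> sets M"
  shows "emeasure (density M (\<lambda>x. ennreal (g x))) Q = ennreal (\<integral>x. g x * indicator Q x \<partial>M)"
proof -
  have gm[measurable]: "g \<in> borel_measurable M" using assms by auto
  have "emeasure (density M (\<lambda>x. ennreal (g x))) Q = (\<integral>\<^sup>+x. ennreal (g x) * indicator Q x \<partial>M)"
    using assms by (intro emeasure_density) auto
  also have "\<dots> = (\<integral>\<^sup>+x. ennreal (g x * indicator Q x) \<partial>M)"
    by (intro nn_integral_cong) (auto split: split_indicator)
  also have "\<dots> = ennreal (\<integral>x. g x * indicator Q x \<partial>M)"
    using assms by (intro nn_integral_eq_integral)
      (auto simp: mult.commute intro!: integrable_mult_indicator[OF assms(3) assms(1), simplified] split: split_indicator)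
  finally show ?thesis .
qed

lemma fin_dens:
  fixes g :: "'a \<Rightarrow> real"
  assumes "integrable M g" "AE x in M. 0 \<le> g x"
  shows "finite_measure (density M (\<lambda>x. ennreal (g x)))"
  using dens_eq[OF assms sets.top] by (intro finite_measureI) simp

lemma ci_char1:
  assumes IJ: "I \<subseteq> J" and Q: "Q \<in> sets M"
    and ae: "AE x in M. CE J (indicator Q) x = CE I (indicator Q) x"
    and A: "A \<in> sets (F J)"
  shows "(\<integral>x. indicator A x * indicator Q x \<partial>M) = (\<integral>x. CE I (indicator A) x * indicator Q x \<partial>M)"
proof -
  interpret SJ: sigma_finite_subalgebra M "F J" by (rule sfs_F)
  have AM[measurable]: "A \<in> sets M" using A sets_F_sub by blast
  have "(\<integral>x. indicator A x * indicator Q x \<partial>M) = (\<integral>x. indicator A x * CE J (indicator Q) x \<partial>M)"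
    using A Q AM by (intro SJ.real_cond_exp_intg(2)[symmetric]) (auto intro!: integrable_real_mult_indicator)
  also have "\<dots> = (\<integral>x. indicator A x * CE I (indicator Q) x \<partial>M)"
    using ae by (intro integral_cong_AE) auto
  also have "\<dots> = (\<integral>x. CE I (indicator A) x * indicator Q x \<partial>M)"
    by (rule sa[OF AM Q])
  finally show ?thesis .
qed

lemma ci_char2:
  assumes IJ: "I \<subseteq> J" and Q: "Q \<in> sets M"
    and eq: "\<And>A. A \<in> sets (F J) \<Longrightarrow> (\<integral>x. indicator A x * indicator Q x \<partial>M) = (\<integral>x. CE I (indicator A) x * indicator Q x \<partial>M)"
  shows "AE x in M. CE J (indicator Q) x = CE I (indicator Q) x"
proof -
  interpret SJ: sigma_finite_subalgebra M "F J" by (rule sfs_F)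
  interpret SI: sigma_finite_subalgebra M "F I" by (rule sfs_F)
  have iQ: "integrable M (indicator Q :: 'a \<Rightarrow> real)" using Q by auto
  show ?thesis
  proof (rule SJ.real_cond_exp_charact)
    fix A assume A: "A \<in> sets (F J)"
    then have AM[measurable]: "A \<in> sets M" using sets_F_sub by blast
    have "(\<integral>x\<in>A. (indicator Q x::real) \<partial>M) = (\<integral>x. indicator A x * indicator Q x \<partial>M)"
      unfolding set_lebesgue_integral_def by (simp add: real_scaleR_def)
    also have "\<dots> = (\<integral>x. CE I (indicator A) x * indicator Q x \<partial>M)" by (rule eq[OF A])
    also have "\<dots> = (\<integral>x. indicator A x * CE I (indicator Q) x \<partial>M)" by (rule sa[OF AM Q, symmetric])
    also have "\<dots> = (\<integral>x\<in>A. CE I (indicator Q) x \<partial>M)"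
      unfolding set_lebesgue_integral_def by (simp add: real_scaleR_def)
    finally show "(\<integral>x\<in>A. indicator Q x \<partial>M) = (\<integral>x\<in>A. CE I (indicator Q) x \<partial>M)" .
  next
    show "integrable M (indicator Q :: 'a \<Rightarrow> real)" by (rule iQ)
    show "integrable M (CE I (indicator Q))" by (rule SI.real_cond_exp_int(1)[OF iQ])
    show "CE I (indicator Q) \<in> borel_measurable (F J)"
      by (rule measurable_from_subalg[OF subalg_FF[OF IJ]]) simp
  qed
qed

lemma ci_extend:
  assumes IJ: "I \<subseteq> J"
    and G: "Int_stable G" "G \<subseteq> sets M" "space M \<in> G"
    and base: "\<And>Q. Q \<in> G \<Longrightarrow> AE x in M. CE J (indicator Q) x = CE I (indicator Q) x"
    and Q: "Q \<in> sigma_sets (space M) G"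
  shows "AE x in M. CE J (indicator Q) x = CE I (indicator Q) x"
proof -
  interpret SI: sigma_finite_subalgebra M "F I" by (rule sfs_F)
  have GP: "G \<subseteq> Pow (space M)" using G(2) sets.sets_into_space by blast
  have sigG: "sigma_sets (space M) G \<subseteq> sets M" using G(2) by (simp add: sets.sigma_sets_subset)
  have QM: "Q \<in> sets M" using Q sigG by blast
  show ?thesis
  proof (rule ci_char2[OF IJ QM])
    fix A assume A: "A \<in> sets (F J)"
    have AM[measurable]: "A \<in> sets M" using A sets_F_sub by blast
    have iA: "integrable M (indicator A :: 'a \<Rightarrow> real)" using AM by auto
    let ?g = "CE I (indicator A)"
    have gi: "integrable M ?g" by (rule SI.real_cond_exp_int(1)[OF iA])
    have gp: "AE x in M. 0 \<le> ?g x" by (rule SI.real_cond_exp_pos) auto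
    let ?N1 = "density M (\<lambda>x. ennreal (indicator A x))"
    let ?N2 = "density M (\<lambda>x. ennreal (?g x))"
    have key: "\<And>X. X \<in> sets M \<Longrightarrow> (emeasure ?N1 X = emeasure ?N2 X) \<longleftrightarrow>
        (\<integral>x. indicator A x * indicator X x \<partial>M) = (\<integral>x. ?g x * indicator X x \<partial>M)"
    proof -
      fix X assume X: "X \<in> sets M"
      have e1: "emeasure ?N1 X = ennreal (\<integral>x. indicator A x * indicator X x \<partial>M)"
        by (rule dens_eq[OF iA _ X]) auto
      have e2: "emeasure ?N2 X = ennreal (\<integral>x. ?g x * indicator X x \<partial>M)"
        by (rule dens_eq[OF gi gp X])
      have n1: "0 \<le> (\<integral>x. indicator A x * (indicator X x::real) \<partial>M)" by (auto intro!: integral_nonneg split: split_indicator)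
      have n2: "0 \<le> (\<integral>x. ?g x * indicator X x \<partial>M)"
        using gp by (intro integral_nonneg_AE) (auto split: split_indicator)
      show "?thesis X" unfolding e1 e2 using n1 n2 by simp
    qed
    have f1: "finite_measure ?N1" by (rule fin_dens[OF iA]) auto
    have f2: "finite_measure ?N2" by (rule fin_dens[OF gi gp])
    have "emeasure ?N1 Q = emeasure ?N2 Q"
      using G(1) GP Q
    proof (induction rule: sigma_sets_induct_disjoint)
      case (basic X)
      then have XM: "X \<in> sets M" using G(2) by blast
      show ?case using key[OF XM] ci_char1[OF IJ XM base[OF basic] A] by simp
    next
      case empty show ?case by simp
    next
      case (compl X)
      have XM: "X \<in> sets M" using compl(1) sigG by blast
      have sp: "emeasure ?N1 (space M) = emeasure ?N2 (space M)"
        using key[OF sets.top] ci_char1[OF IJ sets.top base[OF G(3)] A] by simp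
      have "emeasure ?N1 (space M - X) = emeasure ?N1 (space M) - emeasure ?N1 X"
        using emeasure_compl[of X ?N1] XM finite_measure.emeasure_finite[OF f1] by simp
      also have "\<dots> = emeasure ?N2 (space M) - emeasure ?N2 X" using sp compl(2) by simp
      also have "\<dots> = emeasure ?N2 (space M - X)"
        using emeasure_compl[of X ?N2] XM finite_measure.emeasure_finite[OF f2] by simp
      finally show ?case .
    next
      case (union X)
      have XM: "range X \<subseteq> sets M" using union(2) sigG by blast
      have "emeasure ?N1 (\<Union>i. X i) = (\<Sum>i. emeasure ?N1 (X i))"
        using suminf_emeasure[of X ?N1] XM union(1) by simp
      also have "\<dots> = (\<Sum>i. emeasure ?N2 (X i))" using union(3) by simp
      also have "\<dots> = emeasure ?N2 (\<Union>i. X i)"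
        using suminf_emeasure[of X ?N2] XM union(1) by simp
      finally show ?case .
    qed
    then show "(\<integral>x. indicator A x * indicator Q x \<partial>M) = (\<integral>x. ?g x * indicator Q x \<partial>M)"
      using key[OF QM] by simp
  qed
qed

end



context mk begin

lemma Pprob: "prob_space (P x)" and Psets[measurable_cong]: "sets (P x) = sets borel"
  using markov unfolding homogeneous_markov_def by auto

lemma Pspace[simp]: "space (P x) = UNIV"
  using sets_eq_imp_space_eq[OF Psets] by simp

lemma Pmeasure_meas[measurable]: "B \<in> sets borel \<Longrightarrow> (\<lambda>x. measure (P x) B) \<in> borel_measurable borel"
  using markov unfolding homogeneous_markov_def by auto

lemma Pcond: "B \<in> sets borel \<Longrightarrow>
   AE \<omega> in M. CE {..i} (indicator {\<omega>\<in>space M. Y (i + 1) \<omega> \<in> B}) \<omega> = measure (P (Y i \<omega>)) B"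
  using markov unfolding homogeneous_markov_def by auto

lemma Pemeas: "emeasure (P x) B = ennreal (measure (P x) B)"
  using Pprob finite_measure.emeasure_eq_measure unfolding prob_space_def by blast

lemma Ple1: "measure (P x) B \<le> 1"
  by (rule prob_space.prob_le_1[OF Pprob])

lemma P_meas[measurable]: "P \<in> borel \<rightarrow>\<^sub>M subprob_algebra borel"
proof (rule measurable_subprob_algebra)
  fix a show "subprob_space (P a)" using Pprob by (simp add: prob_space_imp_subprob_space)
  show "sets (P a) = sets borel" by (rule Psets)
next
  fix A :: "real set" assume A: "A \<in> sets borel"
  have "(\<lambda>a. emeasure (P a) A) = (\<lambda>a. ennreal (measure (P a) A))"
    by (simp add: Pemeas)
  then show "(\<lambda>a. emeasure (P a) A) \<in> borel_measurable borel" using A by simp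
qed

lemma pair_law:
  assumes U: "U \<in> F {..k} \<rightarrow>\<^sub>M N" and pi[measurable]: "\<pi> \<in> N \<rightarrow>\<^sub>M borel"
    and UY: "\<And>\<omega>. \<omega> \<in> space M \<Longrightarrow> \<pi> (U \<omega>) = Y k \<omega>"
  shows "distr M (N \<Otimes>\<^sub>M borel) (\<lambda>\<omega>. (U \<omega>, Y (k+1) \<omega>))
       = distr M N U \<bind> (\<lambda>u. P (\<pi> u) \<bind> (\<lambda>z. return (N \<Otimes>\<^sub>M borel) (u, z)))"
    (is "?L = ?R")
proof -
  interpret S: sigma_finite_subalgebra M "F {..k}" by (rule sfs_F)
  have UM[measurable]: "U \<in> M \<rightarrow>\<^sub>M N" by (rule measurable_from_subalg[OF subalg_F U])
  let ?\<kappa> = "\<lambda>u. P (\<pi> u) \<bind> (\<lambda>z. return (N \<Otimes>\<^sub>M borel) (u, z))"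
  have Ppi: "(\<lambda>u. P (\<pi> u)) \<in> N \<rightarrow>\<^sub>M subprob_algebra borel"
    by (rule measurable_compose[OF pi P_meas])
  have kap[measurable]: "?\<kappa> \<in> N \<rightarrow>\<^sub>M subprob_algebra (N \<Otimes>\<^sub>M borel)"
    by (rule measurable_bind[OF Ppi]) (rule measurable_compose[OF _ return_measurable], simp)
  have sk: "sets (?\<kappa> u) = sets (N \<Otimes>\<^sub>M borel)" for u
    by (subst sets_bind[where N="N \<Otimes>\<^sub>M borel"]) auto
  have ne: "space (distr M N U) \<noteq> {}"
  proof -
    obtain \<omega> where "\<omega> \<in> space M" using not_empty by blast
    then have "U \<omega> \<in> space N" by (rule measurable_space[OF UM])
    then show ?thesis by auto
  qed
  let ?E = "{a \<times> b | a b. a \<in> sets N \<and> b \<in> sets (borel :: real measure)}"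
  show ?thesis
  proof (rule measure_eqI_generator_eq[OF Int_stable_pair_measure_generator[of N borel], where \<Omega>="space N \<times> space borel" and A="\<lambda>_. space N \<times> space borel"])
    show "?E \<subseteq> Pow (space N \<times> space borel)"
    proof
      fix X assume "X \<in> ?E"
      then obtain a b where "X = a \<times> b" "a \<in> sets N" "b \<in> sets (borel::real measure)" by blast
      then show "X \<in> Pow (space N \<times> space borel)" using sets.sets_into_space[of a N] by auto
    qed
    show "sets ?L = sigma_sets (space N \<times> space borel) ?E" by (simp add: sets_pair_measure)
    show "sets ?R = sigma_sets (space N \<times> space borel) ?E"
      using sets_bind[of "distr M N U" ?\<kappa> "N \<Otimes>\<^sub>M borel"] sk ne by (simp add: sets_pair_measure)
    show "range (\<lambda>_. space N \<times> space borel) \<subseteq> ?E"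
      using sets.top[of N] sets.top[of "borel :: real measure"] by blast
    show "(\<Union>i::nat. space N \<times> space borel) = space N \<times> space borel" by simp
    show "emeasure ?L (space N \<times> space borel) \<noteq> \<infinity>"
    proof -
      have "prob_space ?L" by (rule prob_space_distr) simp
      then have "finite_measure ?L" unfolding prob_space_def by blast
      from finite_measure.emeasure_finite[OF this] show ?thesis by (simp add: infinity_ennreal_def)
    qed
  next
    fix X assume "X \<in> ?E"
    then obtain a b where X: "X = a \<times> b" and a[measurable]: "a \<in> sets N" and b[measurable]: "b \<in> sets (borel::real measure)" by blast
    define A' where "A' = U -` a \<inter> space M"
    define Yb where "Yb = {\<omega>\<in>space M. Y (k + 1) \<omega> \<in> b}"
    have A'F: "A' \<in> sets (F {..k})" unfolding A'_def using measurable_sets[OF U a] by simp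
    have A'M[measurable]: "A' \<in> sets M" unfolding A'_def using a by simp
    have YbM[measurable]: "Yb \<in> sets M" unfolding Yb_def by simp
    have "emeasure ?L X = emeasure M (A' \<inter> Yb)"
      unfolding X A'_def Yb_def by (subst emeasure_distr) (auto intro!: arg_cong[where f="emeasure M"])
    also have "\<dots> = ennreal (\<integral>\<omega>. indicator A' \<omega> * indicator Yb \<omega> \<partial>M)"
      by (simp add: emeasure_eq_measure indicator_inter_arith[symmetric])
    also have "(\<integral>\<omega>. indicator A' \<omega> * indicator Yb \<omega> \<partial>M) = (\<integral>\<omega>. indicator A' \<omega> * CE {..k} (indicator Yb) \<omega> \<partial>M)"
      using A'F by (intro S.real_cond_exp_intg(2)[symmetric]) (auto intro!: integrable_real_mult_indicator)
    also have "\<dots> = (\<integral>\<omega>. indicator A' \<omega> * measure (P (Y k \<omega>)) b \<partial>M)"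
      using Pcond[OF b, of k] unfolding Yb_def by (intro integral_cong_AE) auto
    also have "ennreal \<dots> = (\<integral>\<^sup>+\<omega>. ennreal (indicator A' \<omega> * measure (P (Y k \<omega>)) b) \<partial>M)"
    proof (rule nn_integral_eq_integral[symmetric])
      show "integrable M (\<lambda>\<omega>. indicator A' \<omega> * measure (P (Y k \<omega>)) b)"
        by (rule integrable_const_bound[where B=1]) (auto intro!: Ple1 split: split_indicator)
    qed auto
    also have "\<dots> = emeasure ?R X"
    proof -
      have "emeasure ?R X = (\<integral>\<^sup>+u. emeasure (?\<kappa> u) X \<partial>distr M N U)"
        using emeasure_bind[OF ne, of ?\<kappa> "N \<Otimes>\<^sub>M borel" X] X kap by simp
      also have "\<dots> = (\<integral>\<^sup>+\<omega>. emeasure (?\<kappa> (U \<omega>)) X \<partial>M)"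
        using X by (intro nn_integral_distr) auto
      also have "\<dots> = (\<integral>\<^sup>+\<omega>. ennreal (indicator A' \<omega> * measure (P (Y k \<omega>)) b) \<partial>M)"
      proof (intro nn_integral_cong)
        fix \<omega> assume \<omega>: "\<omega> \<in> space M"
        have Uw: "U \<omega> \<in> space N" by (rule measurable_space[OF UM \<omega>])
        have rm: "(\<lambda>z. return (N \<Otimes>\<^sub>M borel) (U \<omega>, z)) \<in> P (\<pi> (U \<omega>)) \<rightarrow>\<^sub>M subprob_algebra (N \<Otimes>\<^sub>M borel)"
          by (rule measurable_compose[OF _ return_measurable]) (simp add: measurable_cong_sets[OF Psets refl] Uw)
        have "emeasure (?\<kappa> (U \<omega>)) X = (\<integral>\<^sup>+z. emeasure (return (N \<Otimes>\<^sub>M borel) (U \<omega>, z)) X \<partial>P (\<pi> (U \<omega>)))"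
          using emeasure_bind[OF _ rm, of X] X by simp
        also have "\<dots> = (\<integral>\<^sup>+z. indicator a (U \<omega>) * indicator b z \<partial>P (\<pi> (U \<omega>)))"
          using X by (intro nn_integral_cong) (auto split: split_indicator)
        also have "\<dots> = indicator a (U \<omega>) * emeasure (P (\<pi> (U \<omega>))) b"
          by (subst nn_integral_cmult) auto
        also have "\<dots> = ennreal (indicator A' \<omega> * measure (P (Y k \<omega>)) b)"
          using \<omega> UY[OF \<omega>] unfolding A'_def
          by (auto simp: Pemeas split: split_indicator)
        finally show "emeasure (?\<kappa> (U \<omega>)) X = ennreal (indicator A' \<omega> * measure (P (Y k \<omega>)) b)" .
      qed
      finally show ?thesis by simp
    qed
    finally show "emeasure ?L X = emeasure ?R X" .
  qed
qed

end



context mk begin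

lemma kernel_meas:
  assumes pi[measurable]: "\<pi> \<in> N \<rightarrow>\<^sub>M borel"
  shows "(\<lambda>u. P (\<pi> u) \<bind> (\<lambda>z. return (N \<Otimes>\<^sub>M borel) (u, z))) \<in> N \<rightarrow>\<^sub>M subprob_algebra (N \<Otimes>\<^sub>M borel)"
proof -
  have Ppi: "(\<lambda>u. P (\<pi> u)) \<in> N \<rightarrow>\<^sub>M subprob_algebra borel"
    by (rule measurable_compose[OF pi P_meas])
  show ?thesis
    by (rule measurable_bind[OF Ppi]) (rule measurable_compose[OF _ return_measurable], simp)
qed

lemma pair_nn:
  assumes U: "U \<in> F {..k} \<rightarrow>\<^sub>M N" and pi[measurable]: "\<pi> \<in> N \<rightarrow>\<^sub>M borel"
    and UY: "\<And>\<omega>. \<omega> \<in> space M \<Longrightarrow> \<pi> (U \<omega>) = Y k \<omega>"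
    and h[measurable]: "h \<in> borel_measurable (N \<Otimes>\<^sub>M borel)"
  shows "(\<integral>\<^sup>+\<omega>. h (U \<omega>, Y (k+1) \<omega>) \<partial>M) = (\<integral>\<^sup>+\<omega>. (\<integral>\<^sup>+z. h (U \<omega>, z) \<partial>P (Y k \<omega>)) \<partial>M)"
proof -
  have UM[measurable]: "U \<in> M \<rightarrow>\<^sub>M N" by (rule measurable_from_subalg[OF subalg_F U])
  let ?\<kappa> = "\<lambda>u. P (\<pi> u) \<bind> (\<lambda>z. return (N \<Otimes>\<^sub>M borel) (u, z))"
  have kap: "?\<kappa> \<in> N \<rightarrow>\<^sub>M subprob_algebra (N \<Otimes>\<^sub>M borel)" by (rule kernel_meas[OF pi])
  have kap': "?\<kappa> \<in> distr M N U \<rightarrow>\<^sub>M subprob_algebra (N \<Otimes>\<^sub>M borel)" using kap by simp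
  have im: "(\<lambda>u. \<integral>\<^sup>+v. h v \<partial>?\<kappa> u) \<in> borel_measurable N"
    by (rule measurable_compose[OF kap nn_integral_measurable_subprob_algebra]) simp
  have "(\<integral>\<^sup>+\<omega>. h (U \<omega>, Y (k+1) \<omega>) \<partial>M) = (\<integral>\<^sup>+v. h v \<partial>distr M (N \<Otimes>\<^sub>M borel) (\<lambda>\<omega>. (U \<omega>, Y (k+1) \<omega>)))"
    by (subst nn_integral_distr) auto
  also have "\<dots> = (\<integral>\<^sup>+v. h v \<partial>(distr M N U \<bind> ?\<kappa>))"
    by (subst pair_law[OF U pi UY]) auto
  also have "\<dots> = (\<integral>\<^sup>+u. \<integral>\<^sup>+v. h v \<partial>?\<kappa> u \<partial>distr M N U)"
    by (rule nn_integral_bind[OF h kap'])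
  also have "\<dots> = (\<integral>\<^sup>+\<omega>. \<integral>\<^sup>+v. h v \<partial>?\<kappa> (U \<omega>) \<partial>M)"
    using im by (subst nn_integral_distr) auto
  also have "\<dots> = (\<integral>\<^sup>+\<omega>. (\<integral>\<^sup>+z. h (U \<omega>, z) \<partial>P (Y k \<omega>)) \<partial>M)"
  proof (intro nn_integral_cong)
    fix \<omega> assume \<omega>: "\<omega> \<in> space M"
    have Uw: "U \<omega> \<in> space N" by (rule measurable_space[OF UM \<omega>])
    have rm: "(\<lambda>z. return (N \<Otimes>\<^sub>M borel) (U \<omega>, z)) \<in> P (\<pi> (U \<omega>)) \<rightarrow>\<^sub>M subprob_algebra (N \<Otimes>\<^sub>M borel)"
      by (rule measurable_compose[OF _ return_measurable]) (simp add: measurable_cong_sets[OF Psets refl] Uw)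
    have "(\<integral>\<^sup>+v. h v \<partial>?\<kappa> (U \<omega>)) = (\<integral>\<^sup>+z. \<integral>\<^sup>+v. h v \<partial>return (N \<Otimes>\<^sub>M borel) (U \<omega>, z) \<partial>P (\<pi> (U \<omega>)))"
      by (rule nn_integral_bind[OF h rm])
    also have "\<dots> = (\<integral>\<^sup>+z. h (U \<omega>, z) \<partial>P (\<pi> (U \<omega>)))"
      using Uw by (intro nn_integral_cong nn_integral_return) (auto simp: space_pair_measure)
    finally show "(\<integral>\<^sup>+v. h v \<partial>?\<kappa> (U \<omega>)) = (\<integral>\<^sup>+z. h (U \<omega>, z) \<partial>P (Y k \<omega>))"
      using UY[OF \<omega>] by simp
  qed
  finally show ?thesis .
qed

lemma Pint_meas[measurable]:
  fixes g :: "real \<Rightarrow> real"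
  assumes [measurable]: "g \<in> borel_measurable borel"
  shows "(\<lambda>x. \<integral>z. g z \<partial>P x) \<in> borel_measurable borel"
  by (rule measurable_compose[OF P_meas integral_measurable_subprob_algebra]) simp

lemma Pint_bounds:
  fixes g :: "real \<Rightarrow> real"
  assumes [measurable]: "g \<in> borel_measurable borel" and b: "\<And>x. 0 \<le> g x" "\<And>x. g x \<le> 1"
  shows "0 \<le> (\<integral>z. g z \<partial>P x)" "(\<integral>z. g z \<partial>P x) \<le> 1" "integrable (P x) g"
proof -
  have fm: "finite_measure (P x)" using Pprob unfolding prob_space_def by blast
  show ig: "integrable (P x) g"
    by (rule finite_measure.integrable_const_bound[OF fm, where B=1]) (auto simp: b measurable_cong_sets[OF Psets refl] abs_le_iff intro: order_trans[OF _ b(2)] order_trans[OF _ b(1)])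
  show "0 \<le> (\<integral>z. g z \<partial>P x)" using b by simp
  have "(\<integral>z. g z \<partial>P x) \<le> (\<integral>z. 1 \<partial>P x)"
    using ig b finite_measure.integrable_const[OF fm] by (intro integral_mono) auto
  also have "\<dots> = 1" using prob_space.prob_space[OF Pprob, of x] by simp
  finally show "(\<integral>z. g z \<partial>P x) \<le> 1" .
qed


lemma M1:
  fixes g :: "real \<Rightarrow> real"
  assumes gm[measurable]: "g \<in> borel_measurable borel" and b: "\<And>x. 0 \<le> g x" "\<And>x. g x \<le> 1"
  shows "AE \<omega> in M. CE {..k} (\<lambda>\<omega>. g (Y (k+1) \<omega>)) \<omega> = (\<integral>z. g z \<partial>P (Y k \<omega>))"
proof -
  interpret S: sigma_finite_subalgebra M "F {..k}" by (rule sfs_F)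
  have i1: "integrable M (\<lambda>\<omega>. g (Y (k+1) \<omega>))"
    by (rule integrable_const_bound[where B=1]) (auto simp: b abs_le_iff intro: order_trans[OF _ b(2)] order_trans[OF _ b(1)])
  have i2: "integrable M (\<lambda>\<omega>. \<integral>z. g z \<partial>P (Y k \<omega>))"
    by (rule integrable_const_bound[where B=1]) (use Pint_bounds[OF gm b] in \<open>auto simp: abs_le_iff intro: order_trans[OF _ b(2)]\<close>)
  show ?thesis
  proof (rule S.real_cond_exp_charact[OF _ i1 i2])
    show "(\<lambda>\<omega>. \<integral>z. g z \<partial>P (Y k \<omega>)) \<in> borel_measurable (F {..k})"
      by (rule measurable_compose[OF Y_F Pint_meas[OF gm]]) simp
  next
    fix A assume A: "A \<in> sets (F {..k})"
    have AM[measurable]: "A \<in> sets M" using A sets_F_sub by blast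
    define U where "U = (\<lambda>\<omega>. (indicator A \<omega> :: real, Y k \<omega>))"
    have U: "U \<in> F {..k} \<rightarrow>\<^sub>M borel \<Otimes>\<^sub>M borel"
      unfolding U_def by (intro measurable_Pair borel_measurable_indicator A Y_F) simp
    have hm: "(\<lambda>v::(real \<times> real) \<times> real. ennreal (fst (fst v) * g (snd v))) \<in> borel_measurable ((borel \<Otimes>\<^sub>M borel) \<Otimes>\<^sub>M borel)"
      by measurable
    have "(\<integral>\<^sup>+\<omega>. ennreal (indicator A \<omega> * g (Y (k+1) \<omega>)) \<partial>M) = (\<integral>\<^sup>+\<omega>. (\<integral>\<^sup>+z. ennreal (indicator A \<omega> * g z) \<partial>P (Y k \<omega>)) \<partial>M)"
      using pair_nn[OF U measurable_snd _ hm] unfolding U_def by simp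
    also have "\<dots> = (\<integral>\<^sup>+\<omega>. ennreal (indicator A \<omega> * (\<integral>z. g z \<partial>P (Y k \<omega>))) \<partial>M)"
    proof (intro nn_integral_cong)
      fix \<omega> assume "\<omega> \<in> space M"
      show "(\<integral>\<^sup>+z. ennreal (indicator A \<omega> * g z) \<partial>P (Y k \<omega>)) = ennreal (indicator A \<omega> * (\<integral>z. g z \<partial>P (Y k \<omega>)))"
      proof (cases "\<omega> \<in> A")
        case True
        then show ?thesis using Pint_bounds(3)[OF gm b] b
          by (simp add: nn_integral_eq_integral)
      qed simp
    qed
    finally have eq: "(\<integral>\<^sup>+\<omega>. ennreal (indicator A \<omega> * g (Y (k+1) \<omega>)) \<partial>M) = (\<integral>\<^sup>+\<omega>. ennreal (indicator A \<omega> * (\<integral>z. g z \<partial>P (Y k \<omega>))) \<partial>M)" .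
    have j1: "integrable M (\<lambda>\<omega>. indicator A \<omega> * g (Y (k+1) \<omega>))"
      using integrable_mult_indicator[OF AM i1] by simp
    have j2: "integrable M (\<lambda>\<omega>. indicator A \<omega> * (\<integral>z. g z \<partial>P (Y k \<omega>)))"
      using integrable_mult_indicator[OF AM i2] by simp
    have n1: "0 \<le> (\<integral>\<omega>. indicator A \<omega> * g (Y (k+1) \<omega>) \<partial>M)" using b by simp
    have n2: "0 \<le> (\<integral>\<omega>. indicator A \<omega> * (\<integral>z. g z \<partial>P (Y k \<omega>)) \<partial>M)" using Pint_bounds[OF gm b] by simp
    have "ennreal (\<integral>\<omega>. indicator A \<omega> * g (Y (k+1) \<omega>) \<partial>M) = ennreal (\<integral>\<omega>. indicator A \<omega> * (\<integral>z. g z \<partial>P (Y k \<omega>)) \<partial>M)"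
      using eq j1 j2 b Pint_bounds[OF gm b] by (simp add: nn_integral_eq_integral[symmetric])
    then have "(\<integral>\<omega>. indicator A \<omega> * g (Y (k+1) \<omega>) \<partial>M) = (\<integral>\<omega>. indicator A \<omega> * (\<integral>z. g z \<partial>P (Y k \<omega>)) \<partial>M)"
      using n1 n2 by simp
    then show "(\<integral>\<omega>\<in>A. g (Y (k+1) \<omega>) \<partial>M) = (\<integral>\<omega>\<in>A. (\<integral>z. g z \<partial>P (Y k \<omega>)) \<partial>M)"
      unfolding set_lebesgue_integral_def by simp
  qed
qed

end



context mk begin

lemma ind_F[measurable]: "A \<in> sets (F I) \<Longrightarrow> (indicator A :: 'a \<Rightarrow> real) \<in> borel_measurable (F I)"
  by (rule borel_measurable_indicator)

lemma ae_meas_CE: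
  assumes IJ: "I \<subseteq> J" and f: "integrable M f" and \<phi>: "\<phi> \<in> borel_measurable (F I)"
    and ae: "AE \<omega> in M. CE J f \<omega> = \<phi> \<omega>"
  shows "AE \<omega> in M. CE J f \<omega> = CE I f \<omega>"
proof -
  interpret SI: sigma_finite_subalgebra M "F I" by (rule sfs_F)
  interpret SJ: sigma_finite_subalgebra M "F J" by (rule sfs_F)
  have \<phi>M: "\<phi> \<in> borel_measurable M" by (rule measurable_from_subalg[OF subalg_F \<phi>])
  have i\<phi>: "integrable M \<phi>"
    by (rule integrable_cong_AE_imp[OF SJ.real_cond_exp_int(1)[OF f] \<phi>M ae])
  have "AE \<omega> in M. CE I (CE J f) \<omega> = CE I f \<omega>"
    by (rule SI.real_cond_exp_nested_subalg[OF subalg_F subalg_FF[OF IJ] f])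
  moreover have "AE \<omega> in M. CE I (CE J f) \<omega> = CE I \<phi> \<omega>"
    using ae \<phi>M by (intro SI.real_cond_exp_cong) auto
  moreover have "AE \<omega> in M. CE I \<phi> \<omega> = \<phi> \<omega>"
    by (rule SI.real_cond_exp_F_meas[OF i\<phi> \<phi>])
  ultimately show ?thesis using ae by auto
qed

lemma K1_base: "\<forall>k B. (\<forall>j. B j \<in> sets borel) \<longrightarrow> (\<exists>h. h \<in> borel_measurable borel \<and> (\<forall>x. 0 \<le> h x \<and> h x \<le> 1) \<and>
   (AE \<omega> in M. CE {..k} (indicator (space M \<inter> (\<Inter>j\<in>{k..k + int n}. Y j -` B j))) \<omega> = h (Y k \<omega>)))"
proof (induction n)
  case 0
  show ?case
  proof (intro allI impI)
    fix k and B :: "int \<Rightarrow> real set" assume B: "\<forall>j. B j \<in> sets borel"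
    interpret S: sigma_finite_subalgebra M "F {..k}" by (rule sfs_F)
    have eqs: "space M \<inter> (\<Inter>j\<in>{k..k + int 0}. Y j -` B j) = Y k -` B k \<inter> space M" by auto
    have Fm: "Y k -` B k \<inter> space M \<in> sets (F {..k})" using B by (intro gens_in_F) auto
    have "AE \<omega> in M. CE {..k} (indicator (Y k -` B k \<inter> space M)) \<omega> = indicator (Y k -` B k \<inter> space M) \<omega>"
      using Fm sets_F_sub by (intro S.real_cond_exp_F_meas) auto
    then have "AE \<omega> in M. CE {..k} (indicator (space M \<inter> (\<Inter>j\<in>{k..k + int 0}. Y j -` B j))) \<omega> = indicator (B k) (Y k \<omega>)"
      unfolding eqs using AE_space by eventually_elim (auto split: split_indicator)
    moreover have "indicator (B k) \<in> borel_measurable borel" using B by simp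
    ultimately show "\<exists>h. h \<in> borel_measurable borel \<and> (\<forall>x. 0 \<le> h x \<and> h x \<le> 1) \<and>
      (AE \<omega> in M. CE {..k} (indicator (space M \<inter> (\<Inter>j\<in>{k..k + int 0}. Y j -` B j))) \<omega> = h (Y k \<omega>))"
      by (intro exI[of _ "indicator (B k)"]) (auto split: split_indicator)
  qed
next
  case (Suc n)
  show ?case
  proof (intro allI impI)
    fix k and B :: "int \<Rightarrow> real set" assume B: "\<forall>j. B j \<in> sets borel"
    interpret S: sigma_finite_subalgebra M "F {..k}" by (rule sfs_F)
    obtain h' where h'm[measurable]: "h' \<in> borel_measurable borel" and h'b: "\<forall>x. 0 \<le> h' x \<and> h' x \<le> 1"
      and h'ae: "AE \<omega> in M. CE {..k+1} (indicator (space M \<inter> (\<Inter>j\<in>{k+1..k+1 + int n}. Y j -` B j))) \<omega> = h' (Y (k+1) \<omega>)"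
      using mp[OF spec[OF spec[OF Suc.IH, of "k+1"], of B] B] by blast
    define Qn where "Qn = space M \<inter> (\<Inter>j\<in>{k+1..k+1 + int n}. Y j -` B j)"
    have QnF: "Qn \<in> sets (F UNIV)"
    proof -
      have "Qn \<in> fgens UNIV" unfolding Qn_def fgens_mem using B by (intro exI[of _ "{k+1..k+1 + int n}"] exI[of _ B]) auto
      then show ?thesis using fgens_sub_F by blast
    qed
    have QnM[measurable]: "Qn \<in> sets M" using QnF sets_F_sub by blast
    have Bk[measurable]: "B k \<in> sets borel" using B by simp
    have eqs: "\<And>\<omega>. \<omega> \<in> space M \<Longrightarrow> indicator (space M \<inter> (\<Inter>j\<in>{k..k + int (Suc n)}. Y j -` B j)) \<omega> = indicator (B k) (Y k \<omega>) * (indicator Qn \<omega> :: real)"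
    proof -
      fix \<omega> assume \<omega>: "\<omega> \<in> space M"
      have "{k..k + int (Suc n)} = insert k {k+1..k+1 + int n}" by auto
      then show "indicator (space M \<inter> (\<Inter>j\<in>{k..k + int (Suc n)}. Y j -` B j)) \<omega> = indicator (B k) (Y k \<omega>) * (indicator Qn \<omega> :: real)"
        using \<omega> unfolding Qn_def by (auto split: split_indicator)
    qed
    have a1: "AE \<omega> in M. CE {..k} (indicator (space M \<inter> (\<Inter>j\<in>{k..k + int (Suc n)}. Y j -` B j))) \<omega>
        = CE {..k} (\<lambda>\<omega>. indicator (B k) (Y k \<omega>) * indicator Qn \<omega>) \<omega>"
    proof (rule S.real_cond_exp_cong)
      show "AE \<omega> in M. indicator (space M \<inter> (\<Inter>j\<in>{k..k + int (Suc n)}. Y j -` B j)) \<omega> = indicator (B k) (Y k \<omega>) * (indicator Qn \<omega> :: real)"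
        using eqs by simp
      have "space M \<inter> (\<Inter>j\<in>{k..k + int (Suc n)}. Y j -` B j) \<in> fgens UNIV"
        unfolding fgens_mem using B by (intro exI[of _ "{k..k + int (Suc n)}"] exI[of _ B]) auto
      then show "(indicator (space M \<inter> (\<Inter>j\<in>{k..k + int (Suc n)}. Y j -` B j)) :: 'a \<Rightarrow> real) \<in> borel_measurable M"
        using fgens_sub by (intro borel_measurable_indicator) blast
      show "(\<lambda>\<omega>. indicator (B k) (Y k \<omega>) * (indicator Qn \<omega> :: real)) \<in> borel_measurable M" by measurable
    qed
    have a2: "AE \<omega> in M. CE {..k} (\<lambda>\<omega>. indicator (B k) (Y k \<omega>) * indicator Qn \<omega>) \<omega>
        = indicator (B k) (Y k \<omega>) * CE {..k} (indicator Qn) \<omega>"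
    proof (rule S.real_cond_exp_mult)
      show "(\<lambda>\<omega>. indicator (B k) (Y k \<omega>) :: real) \<in> borel_measurable (F {..k})"
        by (rule measurable_compose[OF Y_F]) auto
      show "(indicator Qn :: 'a \<Rightarrow> real) \<in> borel_measurable M" by simp
      show "integrable M (\<lambda>\<omega>. indicator (B k) (Y k \<omega>) * (indicator Qn \<omega> :: real))"
        by (rule integrable_const_bound[where B=1]) (auto split: split_indicator)
    qed
    have a3: "AE \<omega> in M. CE {..k} (CE {..k+1} (indicator Qn)) \<omega> = CE {..k} (indicator Qn) \<omega>"
      by (rule S.real_cond_exp_nested_subalg[OF subalg_F subalg_FF]) auto
    have a4: "AE \<omega> in M. CE {..k} (CE {..k+1} (indicator Qn)) \<omega> = CE {..k} (\<lambda>\<omega>. h' (Y (k+1) \<omega>)) \<omega>"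
      using h'ae unfolding Qn_def[symmetric] by (intro S.real_cond_exp_cong) auto
    have a5: "AE \<omega> in M. CE {..k} (\<lambda>\<omega>. h' (Y (k+1) \<omega>)) \<omega> = (\<integral>z. h' z \<partial>P (Y k \<omega>))"
      using h'b by (intro M1) auto
    define h where "h x = indicator (B k) x * (\<integral>z. h' z \<partial>P x)" for x
    have hm: "h \<in> borel_measurable borel" unfolding h_def using h'm by measurable
    have hb: "\<forall>x. 0 \<le> h x \<and> h x \<le> 1"
      using Pint_bounds[OF h'm] h'b unfolding h_def by (auto split: split_indicator)
    have "AE \<omega> in M. CE {..k} (indicator (space M \<inter> (\<Inter>j\<in>{k..k + int (Suc n)}. Y j -` B j))) \<omega> = h (Y k \<omega>)"
      using a1 a2 a3 a4 a5 unfolding h_def by eventually_elim simp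
    then show "\<exists>h. h \<in> borel_measurable borel \<and> (\<forall>x. 0 \<le> h x \<and> h x \<le> 1) \<and>
      (AE \<omega> in M. CE {..k} (indicator (space M \<inter> (\<Inter>j\<in>{k..k + int (Suc n)}. Y j -` B j))) \<omega> = h (Y k \<omega>))"
      using hm hb by blast
  qed
qed

end



context mk begin

lemma K1:
  assumes Q: "Q \<in> sets (F {k..})"
  shows "AE \<omega> in M. CE {..k} (indicator Q) \<omega> = CE {k} (indicator Q) \<omega>"
proof (rule ci_extend[of "{k}" "{..k}" "fgens {k..}"])
  show "{k} \<subseteq> {..k}" by simp
  show "Int_stable (fgens {k..})" by (rule fgens_Int_stable)
  show "fgens {k..} \<subseteq> sets M" by (rule fgens_sub)
  show "space M \<in> fgens {k..}" by (rule fgens_space)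
  show "Q \<in> sigma_sets (space M) (fgens {k..})" using Q sets_F_fgens by simp
next
  fix Q assume "Q \<in> fgens {k..}"
  then obtain J B where Q: "Q = space M \<inter> (\<Inter>j\<in>J. Y j -` B j)" and J: "finite J" "J \<subseteq> {k..}"
    and B: "\<forall>j\<in>J. B j \<in> sets borel"
    unfolding fgens_mem by (elim exE conjE)
  define n where "n = nat (Max (insert k J) - k)"
  define B' where "B' j = (if j \<in> J then B j else UNIV)" for j
  have B': "\<forall>j. B' j \<in> sets borel" unfolding B'_def using B by auto
  have rng: "J \<subseteq> {k..k + int n}"
  proof
    fix j assume j: "j \<in> J"
    have "j \<le> Max (insert k J)" using J j by simp
    moreover have "k \<le> Max (insert k J)" using J by simp
    ultimately show "j \<in> {k..k + int n}" using J j unfolding n_def by auto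
  qed
  have Qeq: "Q = space M \<inter> (\<Inter>j\<in>{k..k + int n}. Y j -` B' j)"
  proof (intro set_eqI iffI)
    fix x assume "x \<in> Q" then show "x \<in> space M \<inter> (\<Inter>j\<in>{k..k + int n}. Y j -` B' j)"
      unfolding Q B'_def by auto
  next
    fix x assume x: "x \<in> space M \<inter> (\<Inter>j\<in>{k..k + int n}. Y j -` B' j)"
    have "\<And>j. j \<in> J \<Longrightarrow> Y j x \<in> B j"
    proof -
      fix j assume j: "j \<in> J"
      then have "j \<in> {k..k + int n}" using rng by blast
      then have "Y j x \<in> B' j" using x by blast
      then show "Y j x \<in> B j" using j unfolding B'_def by simp
    qed
    then show "x \<in> Q" unfolding Q using x by blast
  qed
  obtain h where hm: "h \<in> borel_measurable borel" and hb: "\<forall>x. 0 \<le> h x \<and> h x \<le> 1"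
    and hae: "AE \<omega> in M. CE {..k} (indicator (space M \<inter> (\<Inter>j\<in>{k..k + int n}. Y j -` B' j))) \<omega> = h (Y k \<omega>)"
    using mp[OF spec[OF spec[OF K1_base[of n], of k], of B'] B'] by blast
  have QM: "Q \<in> sets M" using \<open>Q \<in> fgens {k..}\<close> fgens_sub by blast
  show "AE \<omega> in M. CE {..k} (indicator Q) \<omega> = CE {k} (indicator Q) \<omega>"
  proof (rule ae_meas_CE[where \<phi>="\<lambda>\<omega>. h (Y k \<omega>)"])
    show "{k} \<subseteq> {..k}" by simp
    show "integrable M (indicator Q :: 'a \<Rightarrow> real)" using QM by simp
    show "(\<lambda>\<omega>. h (Y k \<omega>)) \<in> borel_measurable (F {k})"
      by (rule measurable_compose[OF Y_F hm]) simp
    show "AE \<omega> in M. CE {..k} (indicator Q) \<omega> = h (Y k \<omega>)" using hae Qeq by simp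
  qed
qed

lemma K1':
  assumes R: "R \<in> sets (F {..k})"
  shows "AE \<omega> in M. CE {k..} (indicator R) \<omega> = CE {k} (indicator R) \<omega>"
proof (rule ci_char2)
  show "{k} \<subseteq> {k..}" by simp
  show RM: "R \<in> sets M" using R sets_F_sub by blast
  fix A assume A: "A \<in> sets (F {k..})"
  have AM: "A \<in> sets M" using A sets_F_sub by blast
  have "(\<integral>x. indicator R x * indicator A x \<partial>M) = (\<integral>x. CE {k} (indicator R) x * indicator A x \<partial>M)"
    by (rule ci_char1[OF _ AM K1[OF A] R]) simp
  also have "\<dots> = (\<integral>x. indicator R x * CE {k} (indicator A) x \<partial>M)" by (rule sa[OF RM AM, symmetric])
  finally show "(\<integral>x. indicator A x * indicator R x \<partial>M) = (\<integral>x. CE {k} (indicator A) x * indicator R x \<partial>M)"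
    by (simp add: mult.commute)
qed


lemma CE_lift:
  assumes "I \<subseteq> J" shows "CE I f \<in> borel_measurable (F J)"
  by (rule measurable_from_subalg[OF subalg_FF[OF assms]]) simp

lemma P5:
  assumes S: "S \<in> sets (F (-{i}))"
  shows "AE \<omega> in M. CE {i-1,i,i+1} (indicator S) \<omega> = CE {i-1,i+1} (indicator S) \<omega>"
proof (rule ci_extend[of "{i-1,i+1}" "{i-1,i,i+1}" "fgens (-{i})"])
  show "{i-1,i+1} \<subseteq> {i-1,i,i+1}" by auto
  show "Int_stable (fgens (-{i}))" by (rule fgens_Int_stable)
  show "fgens (-{i}) \<subseteq> sets M" by (rule fgens_sub)
  show "space M \<in> fgens (-{i})" by (rule fgens_space)
  show "S \<in> sigma_sets (space M) (fgens (-{i}))" using S sets_F_fgens by simp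
next
  fix S assume "S \<in> fgens (-{i})"
  then obtain J B where S: "S = space M \<inter> (\<Inter>j\<in>J. Y j -` B j)" and J: "finite J" "J \<subseteq> -{i}"
    and B: "\<forall>j\<in>J. B j \<in> sets borel"
    unfolding fgens_mem by (elim exE conjE)
  define R where "R = space M \<inter> (\<Inter>j\<in>J \<inter> {..i-1}. Y j -` B j)"
  define Q where "Q = space M \<inter> (\<Inter>j\<in>J \<inter> {i+1..}. Y j -` B j)"
  have RF: "R \<in> sets (F {..i-1})"
  proof -
    have "R \<in> fgens {..i-1}" unfolding R_def fgens_mem using J B by (intro exI[of _ "J \<inter> {..i-1}"] exI[of _ B]) auto
    then show ?thesis using fgens_sub_F by blast
  qed
  have QF: "Q \<in> sets (F {i+1..})"
  proof -
    have "Q \<in> fgens {i+1..}" unfolding Q_def fgens_mem using J B by (intro exI[of _ "J \<inter> {i+1..}"] exI[of _ B]) auto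
    then show ?thesis using fgens_sub_F by blast
  qed
  have RM[measurable]: "R \<in> sets M" using RF sets_F_sub by blast
  have QM[measurable]: "Q \<in> sets M" using QF sets_F_sub by blast
  have Jsplit: "J = (J \<inter> {..i-1}) \<union> (J \<inter> {i+1..})"
  proof (intro set_eqI iffI)
    fix j assume "j \<in> J" then have "j \<noteq> i" using J by auto
    then show "j \<in> (J \<inter> {..i-1}) \<union> (J \<inter> {i+1..})" using \<open>j \<in> J\<close> by auto
  qed auto
  have SRQ: "S = R \<inter> Q"
    unfolding S R_def Q_def by (subst Jsplit) auto
  have SM: "S \<in> sets M" using SRQ by simp
  let ?K = "{i-1,i,i+1}"
  interpret SK: sigma_finite_subalgebra M "F ?K" by (rule sfs_F)
  interpret S1: sigma_finite_subalgebra M "F {..i+1}" by (rule sfs_F)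
  define q where "q = CE {i+1} (indicator Q)"
  define r where "r = CE {i-1} (indicator R)"
  have iR: "integrable M (indicator R :: 'a \<Rightarrow> real)" "integrable M (indicator Q :: 'a \<Rightarrow> real)" by auto
  have iq: "integrable M q" unfolding q_def
    by (rule sigma_finite_subalgebra.real_cond_exp_int(1)[OF sfs_F iR(2)])
  have ir: "integrable M r" unfolding r_def
    by (rule sigma_finite_subalgebra.real_cond_exp_int(1)[OF sfs_F iR(1)])
  have RF2: "R \<in> sets (F {..i+1})" using RF sets_F_mono[of "{..i-1}" "{..i+1}"] by auto
  have indS: "(indicator S :: 'a \<Rightarrow> real) = (\<lambda>\<omega>. indicator R \<omega> * indicator Q \<omega>)"
    unfolding SRQ by (rule ext) (simp add: indicator_inter_arith)
  have a: "AE \<omega> in M. CE {..i+1} (\<lambda>\<omega>. indicator R \<omega> * indicator Q \<omega>) \<omega> = indicator R \<omega> * CE {..i+1} (indicator Q) \<omega>"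
    using RF2 by (intro S1.real_cond_exp_mult) (auto intro!: integrable_real_mult_indicator)
  have b: "AE \<omega> in M. CE {..i+1} (indicator Q) \<omega> = q \<omega>"
    unfolding q_def by (rule K1[OF QF])
  have c: "AE \<omega> in M. CE ?K (CE {..i+1} (\<lambda>\<omega>. indicator R \<omega> * indicator Q \<omega>)) \<omega> = CE ?K (\<lambda>\<omega>. indicator R \<omega> * indicator Q \<omega>) \<omega>"
    by (rule SK.real_cond_exp_nested_subalg[OF subalg_F subalg_FF]) (auto intro!: integrable_real_mult_indicator)
  have d: "AE \<omega> in M. CE ?K (CE {..i+1} (\<lambda>\<omega>. indicator R \<omega> * indicator Q \<omega>)) \<omega> = CE ?K (\<lambda>\<omega>. q \<omega> * indicator R \<omega>) \<omega>"
  proof (rule SK.real_cond_exp_cong)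
    show "AE \<omega> in M. CE {..i+1} (\<lambda>\<omega>. indicator R \<omega> * indicator Q \<omega>) \<omega> = q \<omega> * indicator R \<omega>"
      using a b by eventually_elim (simp add: mult.commute)
    have "q \<in> borel_measurable M" unfolding q_def by simp
    then show "(\<lambda>\<omega>. q \<omega> * indicator R \<omega>) \<in> borel_measurable M" by simp
  qed simp
  have e: "AE \<omega> in M. CE ?K (\<lambda>\<omega>. q \<omega> * indicator R \<omega>) \<omega> = q \<omega> * CE ?K (indicator R) \<omega>"
  proof (rule SK.real_cond_exp_mult)
    show "q \<in> borel_measurable (F ?K)" unfolding q_def by (rule CE_lift) auto
    show "integrable M (\<lambda>\<omega>. q \<omega> * indicator R \<omega>)"
      using integrable_mult_indicator[OF RM iq] by (simp add: mult.commute)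
  qed simp
  have f: "AE \<omega> in M. CE ?K (CE {i-1..} (indicator R)) \<omega> = CE ?K (indicator R) \<omega>"
    by (rule SK.real_cond_exp_nested_subalg[OF subalg_F subalg_FF]) auto
  have g: "AE \<omega> in M. CE {i-1..} (indicator R) \<omega> = r \<omega>"
    unfolding r_def using K1'[OF RF] by simp
  have h: "AE \<omega> in M. CE ?K (CE {i-1..} (indicator R)) \<omega> = CE ?K r \<omega>"
    using g by (intro SK.real_cond_exp_cong) (auto simp: r_def)
  have k: "AE \<omega> in M. CE ?K r \<omega> = r \<omega>"
    by (rule SK.real_cond_exp_F_meas[OF ir]) (unfold r_def, rule CE_lift, auto)
  have fin: "AE \<omega> in M. CE ?K (indicator S) \<omega> = q \<omega> * r \<omega>"
    unfolding indS using c d e f h k by eventually_elim simp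
  show "AE \<omega> in M. CE ?K (indicator S) \<omega> = CE {i-1,i+1} (indicator S) \<omega>"
  proof (rule ae_meas_CE[OF _ _ _ fin])
    show "{i-1,i+1} \<subseteq> ?K" by auto
    show "integrable M (indicator S :: 'a \<Rightarrow> real)" using SM by simp
    have "q \<in> borel_measurable (F {i-1,i+1})" unfolding q_def by (rule CE_lift) auto
    moreover have "r \<in> borel_measurable (F {i-1,i+1})" unfolding r_def by (rule CE_lift) auto
    ultimately show "(\<lambda>\<omega>. q \<omega> * r \<omega>) \<in> borel_measurable (F {i-1,i+1})" by simp
  qed
qed

end



context mk begin

lemma factor2:
  assumes D: "D \<in> sets (F {a,b})"
  shows "\<exists>D'\<in>sets (borel \<Otimes>\<^sub>M borel :: (real \<times> real) measure). D = (\<lambda>\<omega>. (Y a \<omega>, Y b \<omega>)) -` D' \<inter> space M"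
proof -
  have "D \<in> sigma_sets (space M) (gens {a,b})" using D sets_F by simp
  then show ?thesis
  proof (induction rule: sigma_sets.induct)
    case (Basic X)
    then obtain j C where X: "X = Y j -` C \<inter> space M" "j \<in> {a,b}" "C \<in> sets borel" unfolding gens_def by blast
    show ?case
    proof (cases "j = a")
      case True
      then show ?thesis using X by (intro bexI[of _ "C \<times> UNIV"]) auto
    next
      case False
      then have "j = b" using X by auto
      then show ?thesis using X by (intro bexI[of _ "UNIV \<times> C"]) auto
    qed
  next
    case Empty
    show ?case by (intro bexI[of _ "{}"]) auto
  next
    case (Compl X)
    then obtain D' where D': "D' \<in> sets (borel \<Otimes>\<^sub>M borel)" "X = (\<lambda>\<omega>. (Y a \<omega>, Y b \<omega>)) -` D' \<inter> space M" by blast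
    have "UNIV - D' \<in> sets (borel \<Otimes>\<^sub>M borel)"
      using sets.compl_sets[of D' "borel \<Otimes>\<^sub>M borel"] D' by (simp add: space_pair_measure)
    then show ?case using D' by (intro bexI[of _ "UNIV - D'"]) auto
  next
    case (Union X)
    then have "\<forall>n. \<exists>D'. D' \<in> sets (borel \<Otimes>\<^sub>M borel) \<and> X n = (\<lambda>\<omega>. (Y a \<omega>, Y b \<omega>)) -` D' \<inter> space M" by blast
    then obtain D' where D': "\<And>n. D' n \<in> sets (borel \<Otimes>\<^sub>M borel)" "\<And>n. X n = (\<lambda>\<omega>. (Y a \<omega>, Y b \<omega>)) -` D' n \<inter> space M"
      by metis
    show ?case using D' by (intro bexI[of _ "\<Union>n. D' n"]) auto
  qed
qed

lemma triple_law:
  assumes E[measurable]: "E \<in> sets ((borel \<Otimes>\<^sub>M borel) \<Otimes>\<^sub>M borel :: ((real \<times> real) \<times> real) measure)"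
  shows "emeasure M {\<omega>\<in>space M. ((Y (i-1) \<omega>, Y i \<omega>), Y (i+1) \<omega>) \<in> E}
    = (\<integral>\<^sup>+x. \<integral>\<^sup>+y. \<integral>\<^sup>+z. indicator E ((x, y), z) \<partial>P y \<partial>P x \<partial>distr M borel (Y (i-1)))"
proof -
  define h where "h u = (\<integral>\<^sup>+z. indicator E (u, z) \<partial>P (snd u))" for u :: "real \<times> real"
  have hm[measurable]: "h \<in> borel_measurable (borel \<Otimes>\<^sub>M borel)"
    unfolding h_def
    by (rule nn_integral_measurable_subprob_algebra2[where N=borel])
       (simp, rule measurable_compose[OF measurable_snd P_meas])
  have U1: "(\<lambda>\<omega>. (Y (i-1) \<omega>, Y i \<omega>)) \<in> F {..i} \<rightarrow>\<^sub>M borel \<Otimes>\<^sub>M borel"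
    by (intro measurable_Pair Y_F) auto
  have U0: "Y (i-1) \<in> F {..i-1} \<rightarrow>\<^sub>M borel" by (rule Y_F) simp
  have "emeasure M {\<omega>\<in>space M. ((Y (i-1) \<omega>, Y i \<omega>), Y (i+1) \<omega>) \<in> E}
      = (\<integral>\<^sup>+\<omega>. indicator E ((Y (i-1) \<omega>, Y i \<omega>), Y (i+1) \<omega>) \<partial>M)"
  proof -
    have "{\<omega>\<in>space M. ((Y (i-1) \<omega>, Y i \<omega>), Y (i+1) \<omega>) \<in> E} \<in> sets M" by measurable
    then have "emeasure M {\<omega>\<in>space M. ((Y (i-1) \<omega>, Y i \<omega>), Y (i+1) \<omega>) \<in> E}
       = (\<integral>\<^sup>+\<omega>. indicator {\<omega>\<in>space M. ((Y (i-1) \<omega>, Y i \<omega>), Y (i+1) \<omega>) \<in> E} \<omega> \<partial>M)" by simp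
    also have "\<dots> = (\<integral>\<^sup>+\<omega>. indicator E ((Y (i-1) \<omega>, Y i \<omega>), Y (i+1) \<omega>) \<partial>M)"
      by (intro nn_integral_cong) (auto split: split_indicator)
    finally show ?thesis .
  qed
  also have "\<dots> = (\<integral>\<^sup>+\<omega>. h (Y (i-1) \<omega>, Y i \<omega>) \<partial>M)"
    unfolding h_def using pair_nn[OF U1 measurable_snd _ E[THEN borel_measurable_indicator]] by simp
  also have "\<dots> = (\<integral>\<^sup>+\<omega>. \<integral>\<^sup>+y. h (Y (i-1) \<omega>, y) \<partial>P (Y (i-1) \<omega>) \<partial>M)"
    using pair_nn[OF U0 measurable_id _ hm] by simp
  also have "\<dots> = (\<integral>\<^sup>+x. \<integral>\<^sup>+y. h (x, y) \<partial>P x \<partial>distr M borel (Y (i-1)))"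
  proof (subst nn_integral_distr)
    show "(\<lambda>x. \<integral>\<^sup>+y. h (x, y) \<partial>P x) \<in> borel_measurable (distr M borel (Y (i-1)))"
      by (simp, rule nn_integral_measurable_subprob_algebra2[OF _ P_meas]) (simp add: case_prod_beta')
  qed auto
  finally show ?thesis unfolding h_def by simp
qed

end

lemma stat_law:
  assumes M: "prob_space M" and Y: "\<And>i. Y i \<in> borel_measurable M" and st: "strictly_stationary M Y"
  shows "distr M borel (Y j) = distr M borel (Y 0)"
proof -
  have eq: "distr M (PiM {0} (\<lambda>_. borel)) (\<lambda>\<omega>. \<lambda>j'\<in>{0::int}. Y (j' + j) \<omega>)
          = distr M (PiM {0} (\<lambda>_. borel)) (\<lambda>\<omega>. \<lambda>j'\<in>{0::int}. Y j' \<omega>)"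
    using st unfolding strictly_stationary_def by auto
  have m1: "(\<lambda>\<omega>. \<lambda>j'\<in>{0::int}. Y (j' + j) \<omega>) \<in> M \<rightarrow>\<^sub>M PiM {0} (\<lambda>_. borel)"
    by (intro measurable_restrict Y)
  have m2: "(\<lambda>\<omega>. \<lambda>j'\<in>{0::int}. Y j' \<omega>) \<in> M \<rightarrow>\<^sub>M PiM {0} (\<lambda>_. borel)"
    by (intro measurable_restrict Y)
  have c: "(\<lambda>f. f 0) \<in> PiM {0::int} (\<lambda>_. borel) \<rightarrow>\<^sub>M (borel :: real measure)"
    by (rule measurable_component_singleton) simp
  have "distr M borel (Y j) = distr (distr M (PiM {0} (\<lambda>_. borel)) (\<lambda>\<omega>. \<lambda>j'\<in>{0::int}. Y (j' + j) \<omega>)) borel (\<lambda>f. f 0)"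
    by (subst distr_distr[OF c m1]) (simp add: comp_def)
  also have "\<dots> = distr (distr M (PiM {0} (\<lambda>_. borel)) (\<lambda>\<omega>. \<lambda>j'\<in>{0::int}. Y j' \<omega>)) borel (\<lambda>f. f 0)"
    by (simp only: eq)
  also have "\<dots> = distr M borel (Y 0)"
    by (subst distr_distr[OF c m2]) (simp add: comp_def)
  finally show ?thesis .
qed




lemma nn_pos:
  fixes g :: "real \<Rightarrow> ennreal"
  assumes g[measurable]: "g \<in> borel_measurable \<mu>" and S[measurable]: "S \<in> sets \<mu>" and pS: "emeasure \<mu> S > 0"
    and gp: "\<And>x. x \<in> S \<Longrightarrow> g x > 0"
  shows "(\<integral>\<^sup>+x. g x \<partial>\<mu>) > 0"
proof (rule ccontr)
  assume "\<not> (\<integral>\<^sup>+x. g x \<partial>\<mu>) > 0"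
  then have "(\<integral>\<^sup>+x. g x \<partial>\<mu>) = 0" by (simp add: not_gr_zero)
  then have "AE x in \<mu>. g x = 0" using nn_integral_0_iff_AE[OF g] by simp
  then have "AE x in \<mu>. x \<notin> S"
  proof eventually_elim
    fix x assume "g x = 0" then show "x \<notin> S" using gp[of x] by auto
  qed
  then have "emeasure \<mu> S = 0"
    using AE_iff_measurable[of S \<mu> "\<lambda>x. x \<notin> S"] S sets.sets_into_space[OF S] by auto
  then show False using pS by simp
qed

locale mk2 = mk M Y P for M :: "'a measure" and Y P +
  fixes \<mu> :: "real measure" and f1 :: "real \<Rightarrow> real \<Rightarrow> ennreal" and A A1 A2 :: "real set"
  assumes mu_sets[measurable_cong]: "sets \<mu> = sets borel"
    and f1m[measurable]: "\<And>x. f1 x \<in> borel_measurable borel"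
    and Pdens: "\<And>x. P x = density \<mu> (f1 x)"
    and A[measurable]: "A \<in> sets borel"
    and A1[measurable]: "A1 \<in> sets borel" and A1A: "A1 \<subseteq> A" and muA1: "emeasure \<mu> A1 > 0"
    and A2[measurable]: "A2 \<in> sets borel" and A2A: "A2 \<subseteq> - A" and muA2: "emeasure \<mu> A2 > 0"
    and f1pos: "\<And>x y. x \<in> A1 \<union> A2 \<Longrightarrow> y \<in> A1 \<union> A2 \<Longrightarrow> f1 x y > 0"
begin

lemma f1m'[measurable]: "f1 x \<in> borel_measurable \<mu>"
  using f1m by (simp add: measurable_cong_sets[OF mu_sets refl])

lemma Pemeas_dens: "C \<in> sets borel \<Longrightarrow> emeasure (P y) C = (\<integral>\<^sup>+z. f1 y z * indicator C z \<partial>\<mu>)"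
  unfolding Pdens by (rule emeasure_density) (auto simp: mu_sets)

lemma emeasP_meas[measurable]: "C \<in> sets borel \<Longrightarrow> (\<lambda>y. emeasure (P y) C) \<in> borel_measurable borel"
  by (rule measurable_compose[OF P_meas measurable_emeasure_subprob_algebra])

lemma slice_meas:
  assumes E[measurable]: "E \<in> sets ((borel \<Otimes>\<^sub>M borel) \<Otimes>\<^sub>M borel :: ((real \<times> real) \<times> real) measure)"
  shows "(\<lambda>y. \<integral>\<^sup>+z. indicator E ((x, y), z) \<partial>P y) \<in> borel_measurable borel"
  by (rule nn_integral_measurable_subprob_algebra2[OF _ P_meas]) simp

lemma kern2_meas:
  assumes E[measurable]: "E \<in> sets ((borel \<Otimes>\<^sub>M borel) \<Otimes>\<^sub>M borel :: ((real \<times> real) \<times> real) measure)"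
  shows "(\<lambda>(x, y). \<integral>\<^sup>+z. indicator E ((x, y), z) \<partial>P y) \<in> borel_measurable (borel \<Otimes>\<^sub>M borel)"
proof -
  have "(\<lambda>u::real\<times>real. \<integral>\<^sup>+z. indicator E (u, z) \<partial>P (snd u)) \<in> borel_measurable (borel \<Otimes>\<^sub>M borel)"
    by (rule nn_integral_measurable_subprob_algebra2[where N=borel])
       (simp, rule measurable_compose[OF measurable_snd P_meas])
  then show ?thesis by (simp add: case_prod_beta')
qed

lemma kern3_meas:
  assumes E[measurable]: "E \<in> sets ((borel \<Otimes>\<^sub>M borel) \<Otimes>\<^sub>M borel :: ((real \<times> real) \<times> real) measure)"
  shows "(\<lambda>x. \<integral>\<^sup>+y. \<integral>\<^sup>+z. indicator E ((x, y), z) \<partial>P y \<partial>P x) \<in> borel_measurable borel"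
  by (rule nn_integral_measurable_subprob_algebra2[OF kern2_meas[OF E] P_meas])

lemma null_lemma:
  fixes \<nu> :: "real measure"
  assumes D'[measurable]: "D' \<in> sets (borel \<Otimes>\<^sub>M borel :: (real \<times> real) measure)"
    and h: "(\<integral>\<^sup>+x. \<integral>\<^sup>+y. \<integral>\<^sup>+z. indicator {((x,y),z). (x,z) \<in> D' \<and> y \<notin> A} ((x, y), z) \<partial>P y \<partial>P x \<partial>\<nu>) = 0"
    and \<nu>[measurable_cong]: "sets \<nu> = sets borel"
  shows "(\<integral>\<^sup>+x. \<integral>\<^sup>+y. \<integral>\<^sup>+z. indicator {((x,y),z). x \<in> A1 \<union> A2 \<and> z \<in> A1 \<union> A2 \<and> (x,z) \<in> D'} ((x, y), z) \<partial>P y \<partial>P x \<partial>\<nu>) = 0"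
proof -
  define E1 :: "((real \<times> real) \<times> real) set" where "E1 = {((x,y),z). (x,z) \<in> D' \<and> y \<notin> A}"
  define E2 :: "((real \<times> real) \<times> real) set" where "E2 = {((x,y),z). x \<in> A1 \<union> A2 \<and> z \<in> A1 \<union> A2 \<and> (x,z) \<in> D'}"
  have E1m[measurable]: "E1 \<in> sets ((borel \<Otimes>\<^sub>M borel) \<Otimes>\<^sub>M borel)"
  proof -
    have "E1 = {v \<in> space ((borel \<Otimes>\<^sub>M borel) \<Otimes>\<^sub>M borel). (fst (fst v), snd v) \<in> D' \<and> snd (fst v) \<notin> A}"
      unfolding E1_def by (auto simp: space_pair_measure)
    also have "\<dots> \<in> sets ((borel \<Otimes>\<^sub>M borel) \<Otimes>\<^sub>M borel)" by measurable
    finally show ?thesis .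
  qed
  have E2m[measurable]: "E2 \<in> sets ((borel \<Otimes>\<^sub>M borel) \<Otimes>\<^sub>M borel)"
  proof -
    have "E2 = {v \<in> space ((borel \<Otimes>\<^sub>M borel) \<Otimes>\<^sub>M borel). fst (fst v) \<in> A1 \<union> A2 \<and> snd v \<in> A1 \<union> A2 \<and> (fst (fst v), snd v) \<in> D'}"
      unfolding E2_def by (auto simp: space_pair_measure)
    also have "\<dots> \<in> sets ((borel \<Otimes>\<^sub>M borel) \<Otimes>\<^sub>M borel)" by measurable
    finally show ?thesis .
  qed
  define I1 where "I1 x = (\<integral>\<^sup>+y. \<integral>\<^sup>+z. indicator E1 ((x, y), z) \<partial>P y \<partial>P x)" for x
  define I2 where "I2 x = (\<integral>\<^sup>+y. \<integral>\<^sup>+z. indicator E2 ((x, y), z) \<partial>P y \<partial>P x)" for x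
  have I1m: "I1 \<in> borel_measurable \<nu>"
    unfolding I1_def measurable_cong_sets[OF \<nu> refl] by (rule kern3_meas[OF E1m])
  have "AE x in \<nu>. I1 x = 0"
    using h nn_integral_0_iff_AE[OF I1m] unfolding I1_def E1_def by simp
  moreover have "I2 x = 0" if x0: "I1 x = 0" for x
  proof (cases "x \<in> A1 \<union> A2")
    case False
    then show ?thesis unfolding I2_def E2_def by simp
  next
    case x: True
    define g where "g y = (\<integral>\<^sup>+z. indicator E1 ((x, y), z) \<partial>P y)" for y
    have gm: "g \<in> borel_measurable (P x)"
      unfolding g_def measurable_cong_sets[OF Psets refl] by (rule slice_meas[OF E1m])
    have "AE y in P x. g y = 0" using x0 nn_integral_0_iff_AE[OF gm] unfolding I1_def g_def by simp
    then have ae: "AE y in \<mu>. 0 < f1 x y \<longrightarrow> g y = 0"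
      unfolding Pdens by (subst (asm) AE_density) auto
    have "\<exists>y2\<in>A2. g y2 = 0"
    proof (rule ccontr)
      assume a: "\<not> (\<exists>y2\<in>A2. g y2 = 0)"
      from ae have "AE y in \<mu>. y \<notin> A2"
      proof (eventually_elim)
        fix y assume b: "0 < f1 x y \<longrightarrow> g y = 0"
        show "y \<notin> A2"
        proof
          assume "y \<in> A2" then have "0 < f1 x y" using f1pos[OF x, of y] by simp
          then show False using a b \<open>y \<in> A2\<close> by auto
        qed
      qed
      then have "emeasure \<mu> A2 = 0"
        using AE_iff_measurable[of A2 \<mu> "\<lambda>x. x \<notin> A2"] sets.sets_into_space[of A2 \<mu>] by (auto simp: mu_sets)
      then show False using muA2 by simp
    qed
    then obtain y2 where y2: "y2 \<in> A2" "g y2 = 0" by blast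
    define Dx where "Dx = Pair x -` D'"
    have Dxm[measurable]: "Dx \<in> sets borel" unfolding Dx_def using sets_Pair1[OF D'] by simp
    have "g y2 = emeasure (P y2) Dx"
    proof -
      have "g y2 = (\<integral>\<^sup>+z. indicator Dx z \<partial>P y2)"
        unfolding g_def using y2 A2A unfolding E1_def Dx_def by (intro nn_integral_cong) (auto split: split_indicator)
      then show ?thesis by (simp add: measurable_cong_sets[OF Psets refl])
    qed
    then have "(\<integral>\<^sup>+z. f1 y2 z * indicator Dx z \<partial>\<mu>) = 0" using y2 Pemeas_dens[OF Dxm] by simp
    then have "AE z in \<mu>. f1 y2 z * indicator Dx z = 0" by (subst (asm) nn_integral_0_iff_AE) auto
    then have aez: "AE z in \<mu>. z \<in> A1 \<union> A2 \<longrightarrow> z \<notin> Dx"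
    proof eventually_elim
      fix z assume a: "f1 y2 z * indicator Dx z = 0"
      show "z \<in> A1 \<union> A2 \<longrightarrow> z \<notin> Dx"
      proof (intro impI notI)
        assume "z \<in> A1 \<union> A2" "z \<in> Dx"
        then have "f1 y2 z > 0" using f1pos[of y2 z] y2 by auto
        then show False using a \<open>z \<in> Dx\<close> by simp
      qed
    qed
    have "(\<integral>\<^sup>+z. indicator E2 ((x, y), z) \<partial>P y) = 0" for y
    proof -
      have "(\<integral>\<^sup>+z. indicator E2 ((x, y), z) \<partial>P y) = (\<integral>\<^sup>+z. indicator ((A1 \<union> A2) \<inter> Dx) z \<partial>P y)"
        unfolding E2_def Dx_def using x by (intro nn_integral_cong) (auto split: split_indicator)
      also have "\<dots> = emeasure (P y) ((A1 \<union> A2) \<inter> Dx)" by (simp add: measurable_cong_sets[OF Psets refl])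
      also have "\<dots> = (\<integral>\<^sup>+z. f1 y z * indicator ((A1 \<union> A2) \<inter> Dx) z \<partial>\<mu>)" by (rule Pemeas_dens) simp
      also have "\<dots> = (\<integral>\<^sup>+z. 0 \<partial>\<mu>)"
      proof (intro nn_integral_cong_AE)
        from aez show "AE z in \<mu>. f1 y z * indicator ((A1 \<union> A2) \<inter> Dx) z = 0"
        proof eventually_elim
          fix z assume "z \<in> A1 \<union> A2 \<longrightarrow> z \<notin> Dx"
          then show "f1 y z * indicator ((A1 \<union> A2) \<inter> Dx) z = 0" by (auto split: split_indicator)
        qed
      qed
      finally show ?thesis by simp
    qed
    then show ?thesis unfolding I2_def by simp
  qed
  ultimately have "AE x in \<nu>. I2 x = 0" by (auto elim: eventually_mono)
  then have "(\<integral>\<^sup>+x. I2 x \<partial>\<nu>) = (\<integral>\<^sup>+x. 0 \<partial>\<nu>)" by (intro nn_integral_cong_AE) auto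
  then show ?thesis unfolding I2_def E2_def by simp
qed


lemma d_pos:
  fixes f0 :: "real \<Rightarrow> ennreal"
  assumes f0m[measurable]: "f0 \<in> borel_measurable borel" and f0pos: "\<And>x. x \<in> A1 \<union> A2 \<Longrightarrow> f0 x > 0"
  shows "(\<integral>\<^sup>+x. \<integral>\<^sup>+y. \<integral>\<^sup>+z. indicator ((A1 \<times> A1) \<times> A1) ((x, y), z) \<partial>P y \<partial>P x \<partial>density \<mu> f0) > 0"
proof -
  define E3 :: "((real \<times> real) \<times> real) set" where "E3 = (A1 \<times> A1) \<times> A1"
  have E3m[measurable]: "E3 \<in> sets ((borel \<Otimes>\<^sub>M borel) \<Otimes>\<^sub>M borel)" unfolding E3_def by simp
  define J where "J x = (\<integral>\<^sup>+y. \<integral>\<^sup>+z. indicator E3 ((x, y), z) \<partial>P y \<partial>P x)" for x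
  have Jm: "J \<in> borel_measurable borel" unfolding J_def by (rule kern3_meas[OF E3m])
  have ey: "emeasure (P y) A1 > 0" if y: "y \<in> A1" for y
  proof -
    have "(\<integral>\<^sup>+z. f1 y z * indicator A1 z \<partial>\<mu>) > 0"
      by (rule nn_pos) (use muA1 f1pos[of y] y in \<open>auto simp: mu_sets\<close>)
    then show ?thesis using Pemeas_dens[OF A1] by simp
  qed
  have Jpos: "J x > 0" if x: "x \<in> A1" for x
  proof -
    define G where "G y = (\<integral>\<^sup>+z. indicator E3 ((x, y), z) \<partial>P y)" for y
    have Gm: "G \<in> borel_measurable borel" unfolding G_def by (rule slice_meas[OF E3m])
    have Gpos: "G y > 0" if y: "y \<in> A1" for y
    proof -
      have "G y = (\<integral>\<^sup>+z. indicator A1 z \<partial>P y)"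
        unfolding G_def E3_def using x y by (intro nn_integral_cong) (auto split: split_indicator)
      also have "\<dots> = emeasure (P y) A1" by (simp add: measurable_cong_sets[OF Psets refl])
      finally show ?thesis using ey[OF y] by simp
    qed
    have "J x = (\<integral>\<^sup>+y. G y \<partial>density \<mu> (f1 x))" unfolding J_def G_def Pdens[of x] ..
    also have "\<dots> = (\<integral>\<^sup>+y. f1 x y * G y \<partial>\<mu>)"
      using Gm by (intro nn_integral_density) (auto simp: measurable_cong_sets[OF mu_sets refl])
    finally have "J x = (\<integral>\<^sup>+y. f1 x y * G y \<partial>\<mu>)" .
    moreover have "(\<integral>\<^sup>+y. f1 x y * G y \<partial>\<mu>) > 0"
    proof (rule nn_pos)
      show "(\<lambda>y. f1 x y * G y) \<in> borel_measurable \<mu>" using Gm by (simp add: measurable_cong_sets[OF mu_sets refl])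
      show "A1 \<in> sets \<mu>" by (simp add: mu_sets)
      show "emeasure \<mu> A1 > 0" by (rule muA1)
      fix y assume "y \<in> A1"
      then show "f1 x y * G y > 0" using f1pos[of x y] x Gpos by (simp add: ennreal_zero_less_mult_iff)
    qed
    ultimately show ?thesis by simp
  qed
  have "(\<integral>\<^sup>+x. J x \<partial>density \<mu> f0) = (\<integral>\<^sup>+x. f0 x * J x \<partial>\<mu>)"
    using Jm by (intro nn_integral_density) (auto simp: measurable_cong_sets[OF mu_sets refl])
  also have "\<dots> > 0"
  proof (rule nn_pos)
    show "(\<lambda>x. f0 x * J x) \<in> borel_measurable \<mu>" using Jm by (simp add: measurable_cong_sets[OF mu_sets refl])
    show "A1 \<in> sets \<mu>" by (simp add: mu_sets)
    show "emeasure \<mu> A1 > 0" by (rule muA1)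
    fix x assume "x \<in> A1"
    then show "f0 x * J x > 0" using f0pos[of x] Jpos by (simp add: ennreal_zero_less_mult_iff)
  qed
  finally show ?thesis unfolding J_def E3_def .
qed

end



context mk2 begin

lemma main_i:
  fixes f0 :: "real \<Rightarrow> ennreal" and H :: "real \<Rightarrow> real" and \<xi> p :: real
  assumes Adef: "A = H -` {..\<xi>}"
    and law: "distr M borel (Y (i-1)) = density \<mu> f0"
    and pB: "measure M {\<omega>\<in>space M. H (Y i \<omega>) \<le> \<xi>} = p"
  shows "measure M {\<omega>\<in>space M. real_cond_exp M (F (-{i})) (indicator {\<omega>\<in>space M. H (Y i \<omega>) \<le> \<xi>}) \<omega> = 1}
      \<le> p - enn2real (\<integral>\<^sup>+x. \<integral>\<^sup>+y. \<integral>\<^sup>+z. indicator ((A1 \<times> A1) \<times> A1) ((x, y), z) \<partial>P y \<partial>P x \<partial>density \<mu> f0)"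
proof -
  define B where "B = {\<omega>\<in>space M. H (Y i \<omega>) \<le> \<xi>}"
  have B': "B = Y i -` A \<inter> space M" unfolding B_def Adef by auto
  have BF: "B \<in> sets (F {i})" unfolding B' by (rule gens_in_F) auto
  have BM[measurable]: "B \<in> sets M" using BF sets_F_sub by blast
  define G where "G = CE (-{i}) (indicator B)"
  define S where "S = {\<omega>\<in>space M. G \<omega> = 1}"
  interpret SC: sigma_finite_subalgebra M "F (-{i})" by (rule sfs_F)
  have Gm: "G \<in> borel_measurable (F (-{i}))" unfolding G_def by simp
  have SF: "S \<in> sets (F (-{i}))"
  proof -
    have "{\<omega>\<in>space (F (-{i})). G \<omega> = 1} \<in> sets (F (-{i}))" using Gm by measurable
    then show ?thesis unfolding S_def by simp
  qed
  have SM[measurable]: "S \<in> sets M" using SF sets_F_sub by blast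
  have s2: "measure M (S - B) = 0"
  proof -
    have "(\<integral>\<omega>. indicator S \<omega> * G \<omega> \<partial>M) = (\<integral>\<omega>. indicator S \<omega> * indicator B \<omega> \<partial>M)"
      unfolding G_def using SF by (intro SC.real_cond_exp_intg(2)) (auto intro!: integrable_real_mult_indicator)
    moreover have "(\<integral>\<omega>. indicator S \<omega> * G \<omega> \<partial>M) = (\<integral>\<omega>. indicator S \<omega> \<partial>M)"
      by (rule Bochner_Integration.integral_cong) (auto simp: S_def split: split_indicator)
    ultimately have "measure M S = measure M (S \<inter> B)"
      by (simp add: indicator_inter_arith[symmetric])
    then show ?thesis using finite_measure_Diff'[OF SM BM] by simp
  qed
  define T where "T = {\<omega>\<in>space M. Y (i-1) \<omega> \<in> A1 \<union> A2 \<and> Y (i+1) \<omega> \<in> A1 \<union> A2}"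
  have TF: "T \<in> sets (F {i-1,i+1})"
  proof -
    have "T = (Y (i-1) -` (A1 \<union> A2) \<inter> space M) \<inter> (Y (i+1) -` (A1 \<union> A2) \<inter> space M)" unfolding T_def by auto
    also have "\<dots> \<in> sets (F {i-1,i+1})" by (intro sets.Int gens_in_F) auto
    finally show ?thesis .
  qed
  have TM[measurable]: "T \<in> sets M" using TF sets_F_sub by blast
  have subK: "{i-1,i+1} \<subseteq> {i-1,i,i+1}" "{i} \<subseteq> {i-1,i,i+1}" by auto
  define K where "K = T \<inter> (space M - B)"
  have KF: "K \<in> sets (F {i-1,i,i+1})"
  proof -
    have "T \<in> sets (F {i-1,i,i+1})" using TF sets_F_mono[OF subK(1)] by blast
    moreover have "B \<in> sets (F {i-1,i,i+1})" using BF sets_F_mono[OF subK(2)] by blast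
    ultimately show ?thesis unfolding K_def by (metis sets.Diff sets.Int sets.top space_F)
  qed
  have KM[measurable]: "K \<in> sets M" using KF sets_F_sub by blast
  interpret SK: sigma_finite_subalgebra M "F {i-1,i,i+1}" by (rule sfs_F)
  interpret S2: sigma_finite_subalgebra M "F {i-1,i+1}" by (rule sfs_F)
  define \<phi> where "\<phi> = CE {i-1,i+1} (indicator S)"
  have \<phi>m[measurable]: "\<phi> \<in> borel_measurable (F {i-1,i+1})" unfolding \<phi>_def by simp
  have \<phi>M[measurable]: "\<phi> \<in> borel_measurable M" unfolding \<phi>_def by simp
  have \<phi>i: "integrable M \<phi>" unfolding \<phi>_def by (rule S2.real_cond_exp_int(1)) simp
  have \<phi>pos: "AE \<omega> in M. 0 \<le> \<phi> \<omega>" unfolding \<phi>_def by (rule S2.real_cond_exp_pos) auto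
  have p5: "AE \<omega> in M. CE {i-1,i,i+1} (indicator S) \<omega> = \<phi> \<omega>" unfolding \<phi>_def by (rule P5[OF SF])
  have iK: "(\<integral>\<omega>. indicator K \<omega> * \<phi> \<omega> \<partial>M) = 0"
  proof -
    have "(\<integral>\<omega>. indicator K \<omega> * \<phi> \<omega> \<partial>M) = (\<integral>\<omega>. indicator K \<omega> * CE {i-1,i,i+1} (indicator S) \<omega> \<partial>M)"
      using p5 by (intro integral_cong_AE) auto
    also have "\<dots> = (\<integral>\<omega>. indicator K \<omega> * indicator S \<omega> \<partial>M)"
      using KF by (intro SK.real_cond_exp_intg(2)) (auto intro!: integrable_real_mult_indicator)
    also have "\<dots> = measure M (K \<inter> S)" by (simp add: indicator_inter_arith[symmetric])
    also have "\<dots> = 0"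
    proof -
      have "measure M (K \<inter> S) \<le> measure M (S - B)" unfolding K_def
        by (rule finite_measure_mono) auto
      then show ?thesis using s2 measure_nonneg[of M "K \<inter> S"] by linarith
    qed
    finally show ?thesis .
  qed
  have aeK: "AE \<omega> in M. indicator K \<omega> * \<phi> \<omega> = 0"
  proof -
    have "integrable M (\<lambda>\<omega>. indicator K \<omega> * \<phi> \<omega>)" using integrable_mult_indicator[OF KM \<phi>i] by simp
    moreover have "AE \<omega> in M. 0 \<le> indicator K \<omega> * \<phi> \<omega>" using \<phi>pos by eventually_elim (simp split: split_indicator)
    ultimately show ?thesis using iK integral_nonneg_eq_0_iff_AE by blast
  qed
  define Dset where "Dset = {\<omega>\<in>space M. \<phi> \<omega> > 0} \<inter> T"
  have DF: "Dset \<in> sets (F {i-1,i+1})"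
  proof -
    have "{\<omega>\<in>space (F {i-1,i+1}). \<phi> \<omega> > 0} \<in> sets (F {i-1,i+1})" by measurable
    then show ?thesis unfolding Dset_def using TF by simp
  qed
  have DM[measurable]: "Dset \<in> sets M" using DF sets_F_sub by blast
  have DBnull: "emeasure M (Dset - B) = 0"
  proof -
    have "AE \<omega> in M. \<omega> \<notin> Dset - B" using aeK
    proof eventually_elim
      fix \<omega> assume "indicator K \<omega> * \<phi> \<omega> = 0"
      show "\<omega> \<notin> Dset - B"
      proof
        assume w: "\<omega> \<in> Dset - B"
        then have "\<omega> \<in> K" unfolding Dset_def K_def by auto
        then have "indicator K \<omega> = (1::real)" by simp
        moreover have "\<phi> \<omega> > 0" using w unfolding Dset_def by auto
        ultimately show False using \<open>indicator K \<omega> * \<phi> \<omega> = 0\<close> by simp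
      qed
    qed
    moreover have "{\<omega>\<in>space M. \<not> (\<omega> \<notin> Dset - B)} = Dset - B" unfolding Dset_def by auto
    ultimately show ?thesis using AE_iff_measurable[of "Dset - B" M "\<lambda>\<omega>. \<omega> \<notin> Dset - B"] by simp
  qed
  obtain D' where D'[measurable]: "D' \<in> sets (borel \<Otimes>\<^sub>M borel :: (real \<times> real) measure)"
    and DD': "Dset = (\<lambda>\<omega>. (Y (i-1) \<omega>, Y (i+1) \<omega>)) -` D' \<inter> space M"
    using factor2[OF DF] by blast
  define E1 :: "((real \<times> real) \<times> real) set" where "E1 = {((x,y),z). (x,z) \<in> D' \<and> y \<notin> A}"
  define E2 :: "((real \<times> real) \<times> real) set" where "E2 = {((x,y),z). x \<in> A1 \<union> A2 \<and> z \<in> A1 \<union> A2 \<and> (x,z) \<in> D'}"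
  have E1m[measurable]: "E1 \<in> sets ((borel \<Otimes>\<^sub>M borel) \<Otimes>\<^sub>M borel)"
  proof -
    have "E1 = {v \<in> space ((borel \<Otimes>\<^sub>M borel) \<Otimes>\<^sub>M borel). (fst (fst v), snd v) \<in> D' \<and> snd (fst v) \<notin> A}"
      unfolding E1_def by (auto simp: space_pair_measure)
    also have "\<dots> \<in> sets ((borel \<Otimes>\<^sub>M borel) \<Otimes>\<^sub>M borel)" by measurable
    finally show ?thesis .
  qed
  have E2m[measurable]: "E2 \<in> sets ((borel \<Otimes>\<^sub>M borel) \<Otimes>\<^sub>M borel)"
  proof -
    have "E2 = {v \<in> space ((borel \<Otimes>\<^sub>M borel) \<Otimes>\<^sub>M borel). fst (fst v) \<in> A1 \<union> A2 \<and> snd v \<in> A1 \<union> A2 \<and> (fst (fst v), snd v) \<in> D'}"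
      unfolding E2_def by (auto simp: space_pair_measure)
    also have "\<dots> \<in> sets ((borel \<Otimes>\<^sub>M borel) \<Otimes>\<^sub>M borel)" by measurable
    finally show ?thesis .
  qed
  have "Dset - B = {\<omega>\<in>space M. ((Y (i-1) \<omega>, Y i \<omega>), Y (i+1) \<omega>) \<in> E1}"
    unfolding DD' B' E1_def by auto
  then have "(\<integral>\<^sup>+x. \<integral>\<^sup>+y. \<integral>\<^sup>+z. indicator E1 ((x, y), z) \<partial>P y \<partial>P x \<partial>distr M borel (Y (i-1))) = 0"
    using DBnull triple_law[OF E1m, of i] by simp
  then have "(\<integral>\<^sup>+x. \<integral>\<^sup>+y. \<integral>\<^sup>+z. indicator E2 ((x, y), z) \<partial>P y \<partial>P x \<partial>distr M borel (Y (i-1))) = 0"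
    unfolding E1_def E2_def by (intro null_lemma[OF D']) auto
  moreover have "Dset = {\<omega>\<in>space M. ((Y (i-1) \<omega>, Y i \<omega>), Y (i+1) \<omega>) \<in> E2}"
  proof -
    have "Dset = Dset \<inter> T" unfolding Dset_def by auto
    also have "Dset \<inter> T = {\<omega>\<in>space M. ((Y (i-1) \<omega>, Y i \<omega>), Y (i+1) \<omega>) \<in> E2}"
      by (simp only: DD') (auto simp: T_def E2_def)
    finally show ?thesis .
  qed
  ultimately have Dnull: "emeasure M Dset = 0" using triple_law[OF E2m, of i] by simp
  have sT: "measure M (S \<inter> T) = 0"
  proof -
    have "measure M (S \<inter> T) = (\<integral>\<omega>. indicator T \<omega> * indicator S \<omega> \<partial>M)"
      by (simp add: indicator_inter_arith[symmetric] Int_commute)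
    also have "\<dots> = (\<integral>\<omega>. indicator T \<omega> * \<phi> \<omega> \<partial>M)"
      unfolding \<phi>_def using TF by (intro S2.real_cond_exp_intg(2)[symmetric]) (auto intro!: integrable_real_mult_indicator)
    also have "\<dots> \<le> (\<integral>\<omega>. indicator Dset \<omega> * \<phi> \<omega> \<partial>M)"
    proof (rule integral_mono)
      show "integrable M (\<lambda>\<omega>. indicator T \<omega> * \<phi> \<omega>)" using integrable_mult_indicator[OF TM \<phi>i] by simp
      show "integrable M (\<lambda>\<omega>. indicator Dset \<omega> * \<phi> \<omega>)" using integrable_mult_indicator[OF DM \<phi>i] by simp
      fix \<omega> assume "\<omega> \<in> space M"
      then show "indicator T \<omega> * \<phi> \<omega> \<le> indicator Dset \<omega> * \<phi> \<omega>"
        unfolding Dset_def by (auto split: split_indicator)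
    qed
    also have "\<dots> = (\<integral>\<omega>. 0 \<partial>M)"
    proof (rule integral_cong_AE)
      have "AE \<omega> in M. \<omega> \<notin> Dset" using Dnull DM by (intro AE_not_in) auto
      then show "AE \<omega> in M. indicator Dset \<omega> * \<phi> \<omega> = 0" by eventually_elim simp
    qed auto
    finally show ?thesis using measure_nonneg[of M "S \<inter> T"] by simp
  qed
  define Trip where "Trip = {\<omega>\<in>space M. ((Y (i-1) \<omega>, Y i \<omega>), Y (i+1) \<omega>) \<in> (A1 \<times> A1) \<times> A1}"
  have TripM[measurable]: "Trip \<in> sets M" unfolding Trip_def by measurable
  have TripBT: "Trip \<subseteq> B \<inter> T" unfolding Trip_def B' T_def using A1A by auto
  have mTrip: "measure M Trip = enn2real (\<integral>\<^sup>+x. \<integral>\<^sup>+y. \<integral>\<^sup>+z. indicator ((A1 \<times> A1) \<times> A1) ((x, y), z) \<partial>P y \<partial>P x \<partial>density \<mu> f0)"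
  proof -
    have "emeasure M Trip = (\<integral>\<^sup>+x. \<integral>\<^sup>+y. \<integral>\<^sup>+z. indicator ((A1 \<times> A1) \<times> A1) ((x, y), z) \<partial>P y \<partial>P x \<partial>distr M borel (Y (i-1)))"
      unfolding Trip_def by (rule triple_law) simp
    then show ?thesis unfolding measure_def law by simp
  qed
  have "measure M S = measure M (S \<inter> B)" using s2 finite_measure_Diff'[OF SM BM] by simp
  also have "\<dots> \<le> measure M ((B - T) \<union> (S \<inter> T))" by (rule finite_measure_mono) auto
  also have "\<dots> \<le> measure M (B - T) + measure M (S \<inter> T)" by (rule measure_subadditive) auto
  also have "\<dots> = measure M B - measure M (B \<inter> T)" using sT finite_measure_Diff'[OF BM TM] by simp
  also have "\<dots> \<le> measure M B - measure M Trip"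
    using finite_measure_mono[OF TripBT] by simp
  finally show ?thesis unfolding mTrip G_def S_def B_def[symmetric] using pB B_def by simp
qed

end



theorem mainTheorem6:
  fixes M :: "'a measure" and Y :: "int \<Rightarrow> 'a \<Rightarrow> real" and H :: "real \<Rightarrow> real"
    and P :: "real \<Rightarrow> real measure" and \<mu> :: "real measure"
    and f0 :: "real \<Rightarrow> ennreal" and f1 :: "real \<Rightarrow> real \<Rightarrow> ennreal"
    and p \<xi> :: real and A1 A2 :: "real set"
  assumes M: "prob_space M"
    and Y_rv: "\<And>i. Y i \<in> borel_measurable M"
    and stat: "strictly_stationary M Y"
    and markov: "homogeneous_markov M Y P"
    and H: "H \<in> borel_measurable borel"
    and mu: "sigma_finite_measure \<mu>" "sets \<mu> = sets borel"
    and f0: "f0 \<in> borel_measurable borel" "distr M borel (Y 0) = density \<mu> f0"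
    and f1: "\<And>x. f1 x \<in> borel_measurable borel" "\<And>x. P x = density \<mu> (f1 x)"
    and p: "0 < p" "p < 1"
    and xi: "\<xi> = Inf {x. measure M {\<omega>\<in>space M. H (Y 1 \<omega>) \<le> x} \<ge> p}"
    and F_xi: "measure M {\<omega>\<in>space M. H (Y 1 \<omega>) \<le> \<xi>} = p"
    and A1: "A1 \<in> sets borel" "A1 \<subseteq> H -` {..\<xi>}" "emeasure \<mu> A1 > 0"
    and A2: "A2 \<in> sets borel" "A2 \<subseteq> - (H -` {..\<xi>})" "emeasure \<mu> A2 > 0"
    and pos: "\<And>x. x \<in> A1 \<union> A2 \<Longrightarrow> f0 x > 0"
             "\<And>x y. x \<in> A1 \<union> A2 \<Longrightarrow> y \<in> A1 \<union> A2 \<Longrightarrow> f1 x y > 0"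
  shows "measure M {\<omega>\<in>space M.
            Gcond M (\<lambda>i \<omega>. H (Y i \<omega>)) (\<lambda>j. gen_sigma M Y (-{j})) 0 \<xi> \<omega> = 1} < p
       \<and> cond_C5 M (\<lambda>i \<omega>. H (Y i \<omega>)) (\<lambda>j. gen_sigma M Y {j}) (\<lambda>j. gen_sigma M Y (-{j})) p \<xi>"
proof -
  interpret prob_space M by (rule M)
  have mk2: "mk2 M Y P \<mu> f1 (H -` {..\<xi>}) A1 A2"
  proof -
    have "H -` {..\<xi>} \<in> sets borel" using measurable_sets[OF H, of "{..\<xi>}"] by simp
    then show ?thesis
      unfolding mk2_def mk_def mk2_axioms_def mk_axioms_def
      using M Y_rv markov mu(2) f1 A1 A2 pos(2) by auto
  qed
  interpret mk2 M Y P \<mu> f1 "H -` {..\<xi>}" A1 A2 by (rule mk2)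
  define dd where "dd = enn2real (\<integral>\<^sup>+x. \<integral>\<^sup>+y. \<integral>\<^sup>+z. indicator ((A1 \<times> A1) \<times> A1) ((x, y), z) \<partial>P y \<partial>P x \<partial>density \<mu> f0)"
  have law: "distr M borel (Y j) = density \<mu> f0" for j
    using stat_law[OF M Y_rv stat, of j] f0(2) by simp
  have pB: "measure M {\<omega>\<in>space M. H (Y j \<omega>) \<le> \<xi>} = p" for j
  proof -
    have Hs: "H -` {..\<xi>} \<in> sets borel" using measurable_sets[OF H, of "{..\<xi>}"] by simp
    have "measure M {\<omega>\<in>space M. H (Y j \<omega>) \<le> \<xi>} = measure (distr M borel (Y j)) (H -` {..\<xi>})"
      using Hs by (subst measure_distr) (auto intro!: arg_cong[where f="measure M"])
    also have "\<dots> = measure (distr M borel (Y 1)) (H -` {..\<xi>})" by (simp only: law)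
    also have "\<dots> = measure M {\<omega>\<in>space M. H (Y 1 \<omega>) \<le> \<xi>}"
      using Hs by (subst measure_distr) (auto intro!: arg_cong[where f="measure M"])
    finally show ?thesis using F_xi by simp
  qed
  have key: "measure M {\<omega>\<in>space M. Gcond M (\<lambda>i \<omega>. H (Y i \<omega>)) (\<lambda>j. gen_sigma M Y (-{j})) i \<xi> \<omega> = 1} \<le> p - dd" for i
    unfolding Gcond_def dd_def by (rule main_i[of H \<xi> i f0 p]) (auto simp: law pB)
  have dpos: "dd > 0"
  proof -
    have "(\<integral>\<^sup>+x. \<integral>\<^sup>+y. \<integral>\<^sup>+z. indicator ((A1 \<times> A1) \<times> A1) ((x, y), z) \<partial>P y \<partial>P x \<partial>density \<mu> f0) > 0"
      by (rule d_pos[OF f0(1) pos(1)])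
    moreover have "(\<integral>\<^sup>+x. \<integral>\<^sup>+y. \<integral>\<^sup>+z. indicator ((A1 \<times> A1) \<times> A1) ((x, y), z) \<partial>P y \<partial>P x \<partial>density \<mu> f0)
        = emeasure M {\<omega>\<in>space M. ((Y (0-1) \<omega>, Y 0 \<omega>), Y (0+1) \<omega>) \<in> (A1 \<times> A1) \<times> A1}"
      using triple_law[of "(A1 \<times> A1) \<times> A1" 0] law[of "0-1"] by simp
    ultimately show ?thesis unfolding dd_def by (simp add: enn2real_positive_iff less_top[symmetric])
  qed
  have dle: "dd \<le> p" using key[of 0] measure_nonneg[of M] by (smt (verit))
  show ?thesis
  proof
    show "measure M {\<omega>\<in>space M. Gcond M (\<lambda>i \<omega>. H (Y i \<omega>)) (\<lambda>j. gen_sigma M Y (-{j})) 0 \<xi> \<omega> = 1} < p"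
      using key[of 0] dpos by simp
    show "cond_C5 M (\<lambda>i \<omega>. H (Y i \<omega>)) (\<lambda>j. gen_sigma M Y {j}) (\<lambda>j. gen_sigma M Y (-{j})) p \<xi>"
      unfolding cond_C5_def
    proof (intro exI[of _ dd] conjI allI)
      show "0 < dd" by (rule dpos)
      show "dd < 1" using dle p by simp
      fix i
      show "subalgebra M (gen_sigma M Y (-{i}))" by (rule subalg_F)
      show "measure M {\<omega>\<in>space M. Gcond M (\<lambda>i \<omega>. H (Y i \<omega>)) (\<lambda>j. gen_sigma M Y (-{j})) i \<xi> \<omega> = 1} \<le> p - dd"
        by (rule key)
      define X where "X = (\<Union>j\<in>-{i}. sets (gen_sigma M Y {j})) \<union>
                  {(\<lambda>\<omega>. H (Y j \<omega>)) -` B \<inter> space M | j B. j \<noteq> i \<and> B \<in> sets borel}"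
      have XF: "X \<subseteq> sets (F (-{i}))"
      proof
        fix x assume "x \<in> X"
        then consider (a) j where "j \<noteq> i" "x \<in> sets (gen_sigma M Y {j})"
          | (b) j B where "j \<noteq> i" "B \<in> sets borel" "x = (\<lambda>\<omega>. H (Y j \<omega>)) -` B \<inter> space M"
          unfolding X_def by blast
        then show "x \<in> sets (F (-{i}))"
        proof cases
          case a then show ?thesis using sets_F_mono[of "{j}" "-{i}"] by auto
        next
          case b
          have "x = Y j -` (H -` B) \<inter> space M" using b by auto
          also have "\<dots> \<in> sets (F (-{i}))"
            using b measurable_sets[OF H b(2)] by (intro gens_in_F) auto
          finally show ?thesis .
        qed
      qed
      have XP: "X \<subseteq> Pow (space M)" using XF sets_F_sub sets.sets_into_space by blast
      have "sets (sigma (space M) X) = sigma_sets (space M) X" using XP by (rule sets_measure_of)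
      also have "\<dots> \<subseteq> sets (F (-{i}))"
        using sets.sigma_sets_subset[of X "F (-{i})"] XF by simp
      finally show "sets (sigma (space M) ((\<Union>j\<in>-{i}. sets (gen_sigma M Y {j})) \<union>
          {(\<lambda>i \<omega>. H (Y i \<omega>)) j -` B \<inter> space M | j B. j \<noteq> i \<and> B \<in> sets borel}))
        \<subseteq> sets (gen_sigma M Y (-{i}))" unfolding X_def by simp
    qed
  qed
qed


end
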